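(* Let $H$ be a group and $A$ an abelian group. Associating to a central extension $1 \to A \to G \to H \to 1$ its extension cocycle class in $\mathrm{H}^2(H, A)$ yields a bijection between (i) isomorphism classes of groups $G$ with $\mathcal{Z}(G) \cong A$ and $G/\mathcal{Z}(G) \cong H$, and (ii) $\mathrm{Aut}(H) \times \mathrm{Aut}(A)$-orbits of classes of centrally non-degenerate cocycles in $\mathrm{H}^2(H, A)$.
   Context: Given a central extension $1\to A\to G\to H\to 1$ and a section $s: H \to G$, the extension cocycle is $\sigma(h_1,h_2) = s(h_1h_2)^{-1}s(h_1)s(h_2) \in A$; its class in $\mathrm{H}^2(H,A)$ (trivial action) is independent of $s$. The group $\mathrm{Aut}(H)\times\mathrm{Aut}(A)$ acts on $\mathrm{H}^2(H,A)$ via $\rho \mapsto \psi_A \circ \rho \circ (\psi_H \times \psi_H)$ for $\psi_H\in\mathrm{Aut}(H)$, $\psi_A\in\mathrm{Aut}(A)$, $\rho \in \mathrm{Z}^2(H,A)$. A 2-cocycle $\sigma \in \mathrm{Z}^2(H,A)$ is called centrally non-degenerate if for every non-trivial $g \in \mathcal{Z}(H)$ there is $h \in H$ with $\sigma(g,h) \neq \sigma(h,g)$. *)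

theory Defs
  imports "HOL-Algebra.Algebra"
begin

definition group_center :: "('a, 'm) monoid_scheme \<Rightarrow> 'a set" where
  "group_center G = {z \<in> carrier G. \<forall>g \<in> carrier G. z \<otimes>\<^bsub>G\<^esub> g = g \<otimes>\<^bsub>G\<^esub> z}"

text \<open>Z^2(H,A) for the trivial action: functions H x H -> A with
  s(h1,h2) s(h1 h2, h3) = s(h2,h3) s(h1, h2 h3).  Only values on the carrier matter.\<close>
definition cocycle2 :: "('h, 'm) monoid_scheme \<Rightarrow> ('a, 'n) monoid_scheme \<Rightarrow> ('h \<Rightarrow> 'h \<Rightarrow> 'a) \<Rightarrow> bool" where
  "cocycle2 H A \<sigma> \<longleftrightarrow>
     (\<forall>h1 \<in> carrier H. \<forall>h2 \<in> carrier H. \<sigma> h1 h2 \<in> carrier A) \<and>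
     (\<forall>h1 \<in> carrier H. \<forall>h2 \<in> carrier H. \<forall>h3 \<in> carrier H.
        \<sigma> h1 h2 \<otimes>\<^bsub>A\<^esub> \<sigma> (h1 \<otimes>\<^bsub>H\<^esub> h2) h3 = \<sigma> h2 h3 \<otimes>\<^bsub>A\<^esub> \<sigma> h1 (h2 \<otimes>\<^bsub>H\<^esub> h3))"

text \<open>Two cocycles define the same class in H^2(H,A) iff they differ by a coboundary
  (h1,h2) |-> f(h1 h2)^{-1} f(h1) f(h2).\<close>
definition cohomologous :: "('h, 'm) monoid_scheme \<Rightarrow> ('a, 'n) monoid_scheme \<Rightarrow> ('h \<Rightarrow> 'h \<Rightarrow> 'a) \<Rightarrow> ('h \<Rightarrow> 'h \<Rightarrow> 'a) \<Rightarrow> bool" where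
  "cohomologous H A \<sigma> \<rho> \<longleftrightarrow>
     (\<exists>f. f \<in> carrier H \<rightarrow> carrier A \<and>
        (\<forall>h1 \<in> carrier H. \<forall>h2 \<in> carrier H.
           \<rho> h1 h2 = \<sigma> h1 h2 \<otimes>\<^bsub>A\<^esub> inv\<^bsub>A\<^esub> (f (h1 \<otimes>\<^bsub>H\<^esub> h2)) \<otimes>\<^bsub>A\<^esub> f h1 \<otimes>\<^bsub>A\<^esub> f h2))"

definition coh_class :: "('h, 'm) monoid_scheme \<Rightarrow> ('a, 'n) monoid_scheme \<Rightarrow> ('h \<Rightarrow> 'h \<Rightarrow> 'a) \<Rightarrow> ('h \<Rightarrow> 'h \<Rightarrow> 'a) set" where
  "coh_class H A \<sigma> = {\<rho>. cocycle2 H A \<rho> \<and> cohomologous H A \<sigma> \<rho>}"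

definition aut_act :: "('h \<Rightarrow> 'h) \<Rightarrow> ('a \<Rightarrow> 'a) \<Rightarrow> ('h \<Rightarrow> 'h \<Rightarrow> 'a) \<Rightarrow> ('h \<Rightarrow> 'h \<Rightarrow> 'a)" where
  "aut_act \<psi>H \<psi>A \<rho> = (\<lambda>h1 h2. \<psi>A (\<rho> (\<psi>H h1) (\<psi>H h2)))"

definition same_orbit :: "('h, 'm) monoid_scheme \<Rightarrow> ('a, 'n) monoid_scheme \<Rightarrow> ('h \<Rightarrow> 'h \<Rightarrow> 'a) \<Rightarrow> ('h \<Rightarrow> 'h \<Rightarrow> 'a) \<Rightarrow> bool" where
  "same_orbit H A \<sigma> \<rho> \<longleftrightarrow>
     (\<exists>\<psi>H \<in> iso H H. \<exists>\<psi>A \<in> iso A A. coh_class H A (aut_act \<psi>H \<psi>A \<sigma>) = coh_class H A \<rho>)"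

definition centrally_nondegenerate :: "('h, 'm) monoid_scheme \<Rightarrow> ('h \<Rightarrow> 'h \<Rightarrow> 'a) \<Rightarrow> bool" where
  "centrally_nondegenerate H \<sigma> \<longleftrightarrow>
     (\<forall>g \<in> group_center H. g \<noteq> \<one>\<^bsub>H\<^esub> \<longrightarrow> (\<exists>h \<in> carrier H. \<sigma> g h \<noteq> \<sigma> h g))"

text \<open>1 -> A -(iota)-> G -(pi)-> H -> 1 is a central extension whose kernel iota(A) is exactly Z(G)
  (so iota: A ~ Z(G) and pi induces G/Z(G) ~ H).\<close>
definition center_extension ::
  "('g, 'p) monoid_scheme \<Rightarrow> ('a, 'n) monoid_scheme \<Rightarrow> ('h, 'm) monoid_scheme \<Rightarrow> ('a \<Rightarrow> 'g) \<Rightarrow> ('g \<Rightarrow> 'h) \<Rightarrow> bool" where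
  "center_extension G A H \<iota> \<pi> \<longleftrightarrow>
     \<iota> \<in> hom A G \<and> inj_on \<iota> (carrier A) \<and> \<iota> ` carrier A = group_center G \<and>
     \<pi> \<in> hom G H \<and> \<pi> ` carrier G = carrier H \<and> kernel G H \<pi> = \<iota> ` carrier A"

definition extension_cocycle ::
  "('g, 'p) monoid_scheme \<Rightarrow> ('a, 'n) monoid_scheme \<Rightarrow> ('h, 'm) monoid_scheme \<Rightarrow> ('a \<Rightarrow> 'g) \<Rightarrow> ('g \<Rightarrow> 'h)
     \<Rightarrow> ('h \<Rightarrow> 'g) \<Rightarrow> ('h \<Rightarrow> 'h \<Rightarrow> 'a) \<Rightarrow> bool" where
  "extension_cocycle G A H \<iota> \<pi> s \<sigma> \<longleftrightarrow>
     (\<forall>h \<in> carrier H. s h \<in> carrier G \<and> \<pi> (s h) = h) \<and>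
     (\<forall>h1 \<in> carrier H. \<forall>h2 \<in> carrier H. \<sigma> h1 h2 \<in> carrier A \<and>
        \<iota> (\<sigma> h1 h2) = inv\<^bsub>G\<^esub> (s (h1 \<otimes>\<^bsub>H\<^esub> h2)) \<otimes>\<^bsub>G\<^esub> s h1 \<otimes>\<^bsub>G\<^esub> s h2)"

definition assoc_cocycle ::
  "('g, 'p) monoid_scheme \<Rightarrow> ('a, 'n) monoid_scheme \<Rightarrow> ('h, 'm) monoid_scheme \<Rightarrow> ('h \<Rightarrow> 'h \<Rightarrow> 'a) \<Rightarrow> bool" where
  "assoc_cocycle G A H \<sigma> \<longleftrightarrow>
     (\<exists>\<iota> \<pi> s. center_extension G A H \<iota> \<pi> \<and> extension_cocycle G A H \<iota> \<pi> s \<sigma>)"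

end

theory Submission
  imports Defs
begin


locale cext = G: group G + A: comm_group A + H: group H
  for G :: "('g,'p) monoid_scheme" and A :: "('a,'n) monoid_scheme" and H :: "('h,'m) monoid_scheme" +
  fixes \<iota> :: "'a \<Rightarrow> 'g" and \<pi> :: "'g \<Rightarrow> 'h" and s :: "'h \<Rightarrow> 'g" and \<sigma> :: "'h \<Rightarrow> 'h \<Rightarrow> 'a"
  assumes ce: "center_extension G A H \<iota> \<pi>" and ec: "extension_cocycle G A H \<iota> \<pi> s \<sigma>"
begin

lemma iota_hom: "\<iota> \<in> hom A G" using ce by (simp add: center_extension_def)
lemma iota_gh: "group_hom A G \<iota>"
  using iota_hom by (simp add: group_hom_def group_hom_axioms_def A.is_group G.is_group)
lemma iota_carr[simp]: "a \<in> carrier A \<Longrightarrow> \<iota> a \<in> carrier G"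
  using iota_hom by (simp add: hom_in_carrier)
lemma iota_mult: "a \<in> carrier A \<Longrightarrow> b \<in> carrier A \<Longrightarrow> \<iota> (a \<otimes>\<^bsub>A\<^esub> b) = \<iota> a \<otimes>\<^bsub>G\<^esub> \<iota> b"
  using iota_hom by (simp add: hom_mult)
lemma iota_inv: "a \<in> carrier A \<Longrightarrow> \<iota> (inv\<^bsub>A\<^esub> a) = inv\<^bsub>G\<^esub> \<iota> a"
  using iota_gh by (simp add: group_hom.hom_inv)
lemma iota_one: "\<iota> \<one>\<^bsub>A\<^esub> = \<one>\<^bsub>G\<^esub>"
  using iota_gh by (simp add: group_hom.hom_one)
lemma iota_inj: "a \<in> carrier A \<Longrightarrow> b \<in> carrier A \<Longrightarrow> \<iota> a = \<iota> b \<Longrightarrow> a = b"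
  using ce unfolding center_extension_def inj_on_def by blast
lemma iota_img: "\<iota> ` carrier A = group_center G" using ce by (simp add: center_extension_def)
lemma iota_comm: "a \<in> carrier A \<Longrightarrow> g \<in> carrier G \<Longrightarrow> \<iota> a \<otimes>\<^bsub>G\<^esub> g = g \<otimes>\<^bsub>G\<^esub> \<iota> a"
  using iota_img unfolding group_center_def by blast
lemma pi_hom: "\<pi> \<in> hom G H" using ce by (simp add: center_extension_def)
lemma pi_gh: "group_hom G H \<pi>"
  using pi_hom by (simp add: group_hom_def group_hom_axioms_def H.is_group G.is_group)
lemma pi_carr[simp]: "g \<in> carrier G \<Longrightarrow> \<pi> g \<in> carrier H"
  using pi_hom by (simp add: hom_in_carrier)
lemma pi_mult: "g \<in> carrier G \<Longrightarrow> k \<in> carrier G \<Longrightarrow> \<pi> (g \<otimes>\<^bsub>G\<^esub> k) = \<pi> g \<otimes>\<^bsub>H\<^esub> \<pi> k"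
  using pi_hom by (simp add: hom_mult)
lemma pi_inv: "g \<in> carrier G \<Longrightarrow> \<pi> (inv\<^bsub>G\<^esub> g) = inv\<^bsub>H\<^esub> \<pi> g"
  using pi_gh by (simp add: group_hom.hom_inv)
lemma ker: "kernel G H \<pi> = \<iota> ` carrier A" using ce by (simp add: center_extension_def)
lemma pi_surj: "\<pi> ` carrier G = carrier H" using ce by (simp add: center_extension_def)
lemma pi_iota[simp]: "a \<in> carrier A \<Longrightarrow> \<pi> (\<iota> a) = \<one>\<^bsub>H\<^esub>"
  using ker unfolding kernel_def by blast
lemma ker_ex: "g \<in> carrier G \<Longrightarrow> \<pi> g = \<one>\<^bsub>H\<^esub> \<Longrightarrow> \<exists>a\<in>carrier A. g = \<iota> a"
  using ker unfolding kernel_def by blast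
lemma center_iff: "g \<in> group_center G \<longleftrightarrow> (\<exists>a\<in>carrier A. g = \<iota> a)"
  using iota_img by blast
lemma s_carr[simp]: "h \<in> carrier H \<Longrightarrow> s h \<in> carrier G"
  using ec by (simp add: extension_cocycle_def)
lemma pi_s[simp]: "h \<in> carrier H \<Longrightarrow> \<pi> (s h) = h"
  using ec by (simp add: extension_cocycle_def)
lemma sigma_carr[simp]: "h1 \<in> carrier H \<Longrightarrow> h2 \<in> carrier H \<Longrightarrow> \<sigma> h1 h2 \<in> carrier A"
  using ec by (simp add: extension_cocycle_def)
lemma sigma_def: "h1 \<in> carrier H \<Longrightarrow> h2 \<in> carrier H \<Longrightarrow>
   \<iota> (\<sigma> h1 h2) = inv\<^bsub>G\<^esub> (s (h1 \<otimes>\<^bsub>H\<^esub> h2)) \<otimes>\<^bsub>G\<^esub> s h1 \<otimes>\<^bsub>G\<^esub> s h2"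
  using ec by (simp add: extension_cocycle_def)
lemma key: "h1 \<in> carrier H \<Longrightarrow> h2 \<in> carrier H \<Longrightarrow>
   s h1 \<otimes>\<^bsub>G\<^esub> s h2 = s (h1 \<otimes>\<^bsub>H\<^esub> h2) \<otimes>\<^bsub>G\<^esub> \<iota> (\<sigma> h1 h2)"
  by (simp add: sigma_def G.m_assoc[symmetric] G.r_inv flip: G.m_assoc)

lemma decomp: "g \<in> carrier G \<Longrightarrow> \<exists>a\<in>carrier A. g = s (\<pi> g) \<otimes>\<^bsub>G\<^esub> \<iota> a"
proof -
  assume g: "g \<in> carrier G"
  have "\<pi> (inv\<^bsub>G\<^esub> s (\<pi> g) \<otimes>\<^bsub>G\<^esub> g) = \<one>\<^bsub>H\<^esub>"
    using g by (simp add: pi_mult pi_inv)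
  then obtain a where a: "a \<in> carrier A" "inv\<^bsub>G\<^esub> s (\<pi> g) \<otimes>\<^bsub>G\<^esub> g = \<iota> a"
    using ker_ex g by (meson G.inv_closed G.m_closed pi_carr s_carr)
  then show ?thesis using g
    by (metis G.inv_closed G.m_assoc G.m_closed G.r_inv G.l_one pi_carr s_carr)
qed

lemma central3:
  assumes "x \<in> carrier G" "y \<in> carrier G" "z \<in> carrier G" "a \<in> carrier A" "b \<in> carrier A" "c \<in> carrier A"
  shows "inv\<^bsub>G\<^esub> (x \<otimes>\<^bsub>G\<^esub> \<iota> a) \<otimes>\<^bsub>G\<^esub> (y \<otimes>\<^bsub>G\<^esub> \<iota> b) \<otimes>\<^bsub>G\<^esub> (z \<otimes>\<^bsub>G\<^esub> \<iota> c)
     = inv\<^bsub>G\<^esub> x \<otimes>\<^bsub>G\<^esub> y \<otimes>\<^bsub>G\<^esub> z \<otimes>\<^bsub>G\<^esub> \<iota> (inv\<^bsub>A\<^esub> a \<otimes>\<^bsub>A\<^esub> b \<otimes>\<^bsub>A\<^esub> c)"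
proof -
  have "inv\<^bsub>G\<^esub> (x \<otimes>\<^bsub>G\<^esub> \<iota> a) = \<iota> (inv\<^bsub>A\<^esub> a) \<otimes>\<^bsub>G\<^esub> inv\<^bsub>G\<^esub> x"
    using assms by (simp add: G.inv_mult_group iota_inv)
  then have "inv\<^bsub>G\<^esub> (x \<otimes>\<^bsub>G\<^esub> \<iota> a) \<otimes>\<^bsub>G\<^esub> (y \<otimes>\<^bsub>G\<^esub> \<iota> b) \<otimes>\<^bsub>G\<^esub> (z \<otimes>\<^bsub>G\<^esub> \<iota> c)
     = \<iota> (inv\<^bsub>A\<^esub> a) \<otimes>\<^bsub>G\<^esub> (inv\<^bsub>G\<^esub> x \<otimes>\<^bsub>G\<^esub> (y \<otimes>\<^bsub>G\<^esub> (\<iota> b \<otimes>\<^bsub>G\<^esub> (z \<otimes>\<^bsub>G\<^esub> \<iota> c))))"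
    using assms by (simp add: G.m_assoc)
  also have "\<iota> b \<otimes>\<^bsub>G\<^esub> (z \<otimes>\<^bsub>G\<^esub> \<iota> c) = z \<otimes>\<^bsub>G\<^esub> (\<iota> b \<otimes>\<^bsub>G\<^esub> \<iota> c)"
    using assms iota_comm[of b z] by (simp add: G.m_assoc[symmetric])
  also have "\<iota> (inv\<^bsub>A\<^esub> a) \<otimes>\<^bsub>G\<^esub> (inv\<^bsub>G\<^esub> x \<otimes>\<^bsub>G\<^esub> (y \<otimes>\<^bsub>G\<^esub> (z \<otimes>\<^bsub>G\<^esub> (\<iota> b \<otimes>\<^bsub>G\<^esub> \<iota> c))))
      = (inv\<^bsub>G\<^esub> x \<otimes>\<^bsub>G\<^esub> y \<otimes>\<^bsub>G\<^esub> z) \<otimes>\<^bsub>G\<^esub> (\<iota> (inv\<^bsub>A\<^esub> a) \<otimes>\<^bsub>G\<^esub> (\<iota> b \<otimes>\<^bsub>G\<^esub> \<iota> c))"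
  proof -
    have w: "inv\<^bsub>G\<^esub> x \<otimes>\<^bsub>G\<^esub> y \<otimes>\<^bsub>G\<^esub> z \<in> carrier G" using assms by simp
    have "\<iota> (inv\<^bsub>A\<^esub> a) \<otimes>\<^bsub>G\<^esub> ((inv\<^bsub>G\<^esub> x \<otimes>\<^bsub>G\<^esub> y \<otimes>\<^bsub>G\<^esub> z) \<otimes>\<^bsub>G\<^esub> (\<iota> b \<otimes>\<^bsub>G\<^esub> \<iota> c))
      = (inv\<^bsub>G\<^esub> x \<otimes>\<^bsub>G\<^esub> y \<otimes>\<^bsub>G\<^esub> z) \<otimes>\<^bsub>G\<^esub> (\<iota> (inv\<^bsub>A\<^esub> a) \<otimes>\<^bsub>G\<^esub> (\<iota> b \<otimes>\<^bsub>G\<^esub> \<iota> c))"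
      using assms w iota_comm[of "inv\<^bsub>A\<^esub> a" "inv\<^bsub>G\<^esub> x \<otimes>\<^bsub>G\<^esub> y \<otimes>\<^bsub>G\<^esub> z"]
      by (simp only: G.m_assoc[symmetric] iota_carr A.inv_closed G.m_closed G.inv_closed)
    then show ?thesis using assms by (simp add: G.m_assoc)
  qed
  finally show ?thesis using assms by (simp add: iota_mult G.m_assoc)
qed

end



context cext begin

lemma cocycle: "cocycle2 H A \<sigma>"
  unfolding cocycle2_def
proof (intro conjI ballI)
  fix h1 h2 h3 assume h: "h1 \<in> carrier H" "h2 \<in> carrier H" "h3 \<in> carrier H"
  have e1: "(s h1 \<otimes>\<^bsub>G\<^esub> s h2) \<otimes>\<^bsub>G\<^esub> s h3 = s (h1 \<otimes>\<^bsub>H\<^esub> h2 \<otimes>\<^bsub>H\<^esub> h3) \<otimes>\<^bsub>G\<^esub> \<iota> (\<sigma> (h1 \<otimes>\<^bsub>H\<^esub> h2) h3 \<otimes>\<^bsub>A\<^esub> \<sigma> h1 h2)"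
  proof -
    have "(s h1 \<otimes>\<^bsub>G\<^esub> s h2) \<otimes>\<^bsub>G\<^esub> s h3 = s (h1 \<otimes>\<^bsub>H\<^esub> h2) \<otimes>\<^bsub>G\<^esub> (\<iota> (\<sigma> h1 h2) \<otimes>\<^bsub>G\<^esub> s h3)"
      using h by (simp add: key G.m_assoc)
    also have "\<dots> = (s (h1 \<otimes>\<^bsub>H\<^esub> h2) \<otimes>\<^bsub>G\<^esub> s h3) \<otimes>\<^bsub>G\<^esub> \<iota> (\<sigma> h1 h2)"
      using h iota_comm[of "\<sigma> h1 h2" "s h3"] by (simp add: G.m_assoc)
    also have "\<dots> = s (h1 \<otimes>\<^bsub>H\<^esub> h2 \<otimes>\<^bsub>H\<^esub> h3) \<otimes>\<^bsub>G\<^esub> \<iota> (\<sigma> (h1 \<otimes>\<^bsub>H\<^esub> h2) h3 \<otimes>\<^bsub>A\<^esub> \<sigma> h1 h2)"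
      using h by (simp add: key G.m_assoc iota_mult)
    finally show ?thesis .
  qed
  have e2: "s h1 \<otimes>\<^bsub>G\<^esub> (s h2 \<otimes>\<^bsub>G\<^esub> s h3) = s (h1 \<otimes>\<^bsub>H\<^esub> h2 \<otimes>\<^bsub>H\<^esub> h3) \<otimes>\<^bsub>G\<^esub> \<iota> (\<sigma> h1 (h2 \<otimes>\<^bsub>H\<^esub> h3) \<otimes>\<^bsub>A\<^esub> \<sigma> h2 h3)"
  proof -
    have "s h1 \<otimes>\<^bsub>G\<^esub> (s h2 \<otimes>\<^bsub>G\<^esub> s h3) = (s h1 \<otimes>\<^bsub>G\<^esub> s (h2 \<otimes>\<^bsub>H\<^esub> h3)) \<otimes>\<^bsub>G\<^esub> \<iota> (\<sigma> h2 h3)"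
      using h by (simp only: key[OF h(2,3)]) (simp add: G.m_assoc)
    also have "\<dots> = s (h1 \<otimes>\<^bsub>H\<^esub> h2 \<otimes>\<^bsub>H\<^esub> h3) \<otimes>\<^bsub>G\<^esub> \<iota> (\<sigma> h1 (h2 \<otimes>\<^bsub>H\<^esub> h3) \<otimes>\<^bsub>A\<^esub> \<sigma> h2 h3)"
      using h by (simp only: key[OF h(1) H.m_closed[OF h(2,3)]]) (simp add: G.m_assoc H.m_assoc iota_mult)
    finally show ?thesis .
  qed
  have "\<iota> (\<sigma> (h1 \<otimes>\<^bsub>H\<^esub> h2) h3 \<otimes>\<^bsub>A\<^esub> \<sigma> h1 h2) = \<iota> (\<sigma> h1 (h2 \<otimes>\<^bsub>H\<^esub> h3) \<otimes>\<^bsub>A\<^esub> \<sigma> h2 h3)"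
    using e1 e2 h by (simp add: G.m_assoc)
  then have "\<sigma> (h1 \<otimes>\<^bsub>H\<^esub> h2) h3 \<otimes>\<^bsub>A\<^esub> \<sigma> h1 h2 = \<sigma> h1 (h2 \<otimes>\<^bsub>H\<^esub> h3) \<otimes>\<^bsub>A\<^esub> \<sigma> h2 h3"
    using h by (intro iota_inj) auto
  then show "\<sigma> h1 h2 \<otimes>\<^bsub>A\<^esub> \<sigma> (h1 \<otimes>\<^bsub>H\<^esub> h2) h3 = \<sigma> h2 h3 \<otimes>\<^bsub>A\<^esub> \<sigma> h1 (h2 \<otimes>\<^bsub>H\<^esub> h3)"
    using h by (simp add: A.m_comm)
qed (simp)

lemma nondeg: "centrally_nondegenerate H \<sigma>"
  unfolding centrally_nondegenerate_def
proof (intro ballI impI)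
  fix g assume g: "g \<in> group_center H" "g \<noteq> \<one>\<^bsub>H\<^esub>"
  have gH: "g \<in> carrier H" using g unfolding group_center_def by blast
  have "s g \<notin> group_center G"
  proof
    assume "s g \<in> group_center G"
    then obtain a where "a \<in> carrier A" "s g = \<iota> a" using center_iff by blast
    then have "g = \<one>\<^bsub>H\<^esub>" using gH pi_s[of g] by simp
    with g show False by simp
  qed
  then obtain x where x: "x \<in> carrier G" "s g \<otimes>\<^bsub>G\<^esub> x \<noteq> x \<otimes>\<^bsub>G\<^esub> s g"
    using gH unfolding group_center_def by auto
  obtain a where a: "a \<in> carrier A" "x = s (\<pi> x) \<otimes>\<^bsub>G\<^esub> \<iota> a" using decomp x by blast
  define h where "h = \<pi> x"
  have hH: "h \<in> carrier H" using x h_def by simp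
  have "s g \<otimes>\<^bsub>G\<^esub> s h \<noteq> s h \<otimes>\<^bsub>G\<^esub> s g"
  proof
    assume eq: "s g \<otimes>\<^bsub>G\<^esub> s h = s h \<otimes>\<^bsub>G\<^esub> s g"
    have "s g \<otimes>\<^bsub>G\<^esub> x = (s g \<otimes>\<^bsub>G\<^esub> s h) \<otimes>\<^bsub>G\<^esub> \<iota> a"
      using a hH gH h_def by (simp add: G.m_assoc)
    also have "\<dots> = s h \<otimes>\<^bsub>G\<^esub> (s g \<otimes>\<^bsub>G\<^esub> \<iota> a)" using eq a hH gH by (simp add: G.m_assoc)
    also have "\<dots> = s h \<otimes>\<^bsub>G\<^esub> (\<iota> a \<otimes>\<^bsub>G\<^esub> s g)" using a hH gH iota_comm[of a "s g"] by simp
    also have "\<dots> = (s h \<otimes>\<^bsub>G\<^esub> \<iota> a) \<otimes>\<^bsub>G\<^esub> s g" using a hH gH by (simp add: G.m_assoc)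
    also have "\<dots> = x \<otimes>\<^bsub>G\<^esub> s g" using a(2) h_def by simp
    finally show False using x by simp
  qed
  moreover have "g \<otimes>\<^bsub>H\<^esub> h = h \<otimes>\<^bsub>H\<^esub> g" using g hH unfolding group_center_def by blast
  ultimately have "\<sigma> g h \<noteq> \<sigma> h g" using key[of g h] key[of h g] gH hH by auto
  then show "\<exists>h\<in>carrier H. \<sigma> g h \<noteq> \<sigma> h g" using hH by blast
qed

end



definition tw :: "('h,'m) monoid_scheme \<Rightarrow> ('a,'n) monoid_scheme \<Rightarrow> ('h \<Rightarrow> 'h \<Rightarrow> 'a) \<Rightarrow> ('h \<times> 'a) monoid" where
  "tw H A \<sigma> = \<lparr>carrier = carrier H \<times> carrier A,
     monoid.mult = (\<lambda>x y. (fst x \<otimes>\<^bsub>H\<^esub> fst y, \<sigma> (fst x) (fst y) \<otimes>\<^bsub>A\<^esub> snd x \<otimes>\<^bsub>A\<^esub> snd y)),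
     one = (\<one>\<^bsub>H\<^esub>, inv\<^bsub>A\<^esub> (\<sigma> \<one>\<^bsub>H\<^esub> \<one>\<^bsub>H\<^esub>))\<rparr>"

lemma tw_simps[simp]:
  "carrier (tw H A \<sigma>) = carrier H \<times> carrier A"
  "(x \<otimes>\<^bsub>tw H A \<sigma>\<^esub> y) = (fst x \<otimes>\<^bsub>H\<^esub> fst y, \<sigma> (fst x) (fst y) \<otimes>\<^bsub>A\<^esub> snd x \<otimes>\<^bsub>A\<^esub> snd y)"
  "\<one>\<^bsub>tw H A \<sigma>\<^esub> = (\<one>\<^bsub>H\<^esub>, inv\<^bsub>A\<^esub> (\<sigma> \<one>\<^bsub>H\<^esub> \<one>\<^bsub>H\<^esub>))"
  by (simp_all add: tw_def)

locale hac = H: group H + A: comm_group A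
  for H :: "('h,'m) monoid_scheme" and A :: "('a,'n) monoid_scheme"
begin

lemma coc_carr: "cocycle2 H A \<sigma> \<Longrightarrow> h1 \<in> carrier H \<Longrightarrow> h2 \<in> carrier H \<Longrightarrow> \<sigma> h1 h2 \<in> carrier A"
  by (simp add: cocycle2_def)

lemma coc_eq: "cocycle2 H A \<sigma> \<Longrightarrow> h1 \<in> carrier H \<Longrightarrow> h2 \<in> carrier H \<Longrightarrow> h3 \<in> carrier H \<Longrightarrow>
   \<sigma> h1 h2 \<otimes>\<^bsub>A\<^esub> \<sigma> (h1 \<otimes>\<^bsub>H\<^esub> h2) h3 = \<sigma> h2 h3 \<otimes>\<^bsub>A\<^esub> \<sigma> h1 (h2 \<otimes>\<^bsub>H\<^esub> h3)"
  by (simp add: cocycle2_def)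

lemma coc_1h: assumes c: "cocycle2 H A \<sigma>" and h: "h \<in> carrier H"
  shows "\<sigma> \<one>\<^bsub>H\<^esub> h = \<sigma> \<one>\<^bsub>H\<^esub> \<one>\<^bsub>H\<^esub>"
proof -
  have "\<sigma> \<one>\<^bsub>H\<^esub> \<one>\<^bsub>H\<^esub> \<otimes>\<^bsub>A\<^esub> \<sigma> \<one>\<^bsub>H\<^esub> h = \<sigma> \<one>\<^bsub>H\<^esub> h \<otimes>\<^bsub>A\<^esub> \<sigma> \<one>\<^bsub>H\<^esub> h"
    using coc_eq[OF c H.one_closed H.one_closed h] h by simp
  then show ?thesis using c h by (metis A.r_cancel H.one_closed coc_carr)
qed

lemma coc_h1: assumes c: "cocycle2 H A \<sigma>" and h: "h \<in> carrier H"
  shows "\<sigma> h \<one>\<^bsub>H\<^esub> = \<sigma> \<one>\<^bsub>H\<^esub> \<one>\<^bsub>H\<^esub>"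
proof -
  have "\<sigma> h \<one>\<^bsub>H\<^esub> \<otimes>\<^bsub>A\<^esub> \<sigma> h \<one>\<^bsub>H\<^esub> = \<sigma> \<one>\<^bsub>H\<^esub> \<one>\<^bsub>H\<^esub> \<otimes>\<^bsub>A\<^esub> \<sigma> h \<one>\<^bsub>H\<^esub>"
    using coc_eq[OF c h H.one_closed H.one_closed] h by simp
  then show ?thesis using c h by (metis A.r_cancel H.one_closed coc_carr)
qed

lemma tw_group: assumes c: "cocycle2 H A \<sigma>" shows "group (tw H A \<sigma>)"
proof (rule groupI)
  note cc = coc_carr[OF c]
  show "\<And>x y. x \<in> carrier (tw H A \<sigma>) \<Longrightarrow> y \<in> carrier (tw H A \<sigma>) \<Longrightarrow> x \<otimes>\<^bsub>tw H A \<sigma>\<^esub> y \<in> carrier (tw H A \<sigma>)"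
    using cc by auto
  show "\<one>\<^bsub>tw H A \<sigma>\<^esub> \<in> carrier (tw H A \<sigma>)" using cc by auto
  show "x \<otimes>\<^bsub>tw H A \<sigma>\<^esub> y \<otimes>\<^bsub>tw H A \<sigma>\<^esub> z = x \<otimes>\<^bsub>tw H A \<sigma>\<^esub> (y \<otimes>\<^bsub>tw H A \<sigma>\<^esub> z)"
    if hx: "x \<in> carrier (tw H A \<sigma>)" "y \<in> carrier (tw H A \<sigma>)" "z \<in> carrier (tw H A \<sigma>)" for x y z
  proof -
    obtain h1 a1 h2 a2 h3 a3 where xyz: "x = (h1,a1)" "y = (h2,a2)" "z = (h3,a3)"
      and m: "h1 \<in> carrier H" "h2 \<in> carrier H" "h3 \<in> carrier H" "a1 \<in> carrier A" "a2 \<in> carrier A" "a3 \<in> carrier A"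
      using hx by (cases x, cases y, cases z) auto
    have "\<sigma> (h1 \<otimes>\<^bsub>H\<^esub> h2) h3 \<otimes>\<^bsub>A\<^esub> (\<sigma> h1 h2 \<otimes>\<^bsub>A\<^esub> a1 \<otimes>\<^bsub>A\<^esub> a2) \<otimes>\<^bsub>A\<^esub> a3
        = (\<sigma> h1 h2 \<otimes>\<^bsub>A\<^esub> \<sigma> (h1 \<otimes>\<^bsub>H\<^esub> h2) h3) \<otimes>\<^bsub>A\<^esub> (a1 \<otimes>\<^bsub>A\<^esub> (a2 \<otimes>\<^bsub>A\<^esub> a3))"
      using m cc by (simp add: A.m_ac)
    also have "\<dots> = (\<sigma> h2 h3 \<otimes>\<^bsub>A\<^esub> \<sigma> h1 (h2 \<otimes>\<^bsub>H\<^esub> h3)) \<otimes>\<^bsub>A\<^esub> (a1 \<otimes>\<^bsub>A\<^esub> (a2 \<otimes>\<^bsub>A\<^esub> a3))"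
      using coc_eq[OF c m(1-3)] by simp
    also have "\<dots> = \<sigma> h1 (h2 \<otimes>\<^bsub>H\<^esub> h3) \<otimes>\<^bsub>A\<^esub> a1 \<otimes>\<^bsub>A\<^esub> (\<sigma> h2 h3 \<otimes>\<^bsub>A\<^esub> a2 \<otimes>\<^bsub>A\<^esub> a3)"
      using m cc by (simp add: A.m_ac)
    finally show ?thesis using xyz m by (simp add: H.m_assoc)
  qed
  show "\<one>\<^bsub>tw H A \<sigma>\<^esub> \<otimes>\<^bsub>tw H A \<sigma>\<^esub> x = x" if hx: "x \<in> carrier (tw H A \<sigma>)" for x
  proof -
    obtain h a where x: "x = (h,a)" "h \<in> carrier H" "a \<in> carrier A" using hx by (cases x) auto
    have "\<sigma> \<one>\<^bsub>H\<^esub> h \<otimes>\<^bsub>A\<^esub> inv\<^bsub>A\<^esub> \<sigma> \<one>\<^bsub>H\<^esub> \<one>\<^bsub>H\<^esub> \<otimes>\<^bsub>A\<^esub> a = a"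
      using coc_1h[OF c x(2)] x cc by simp
    then show ?thesis using x by simp
  qed
  show "\<exists>y\<in>carrier (tw H A \<sigma>). y \<otimes>\<^bsub>tw H A \<sigma>\<^esub> x = \<one>\<^bsub>tw H A \<sigma>\<^esub>" if hx: "x \<in> carrier (tw H A \<sigma>)" for x
  proof -
    obtain h a where x: "x = (h,a)" "h \<in> carrier H" "a \<in> carrier A" using hx by (cases x) auto
    define b where "b = inv\<^bsub>A\<^esub> \<sigma> \<one>\<^bsub>H\<^esub> \<one>\<^bsub>H\<^esub> \<otimes>\<^bsub>A\<^esub> inv\<^bsub>A\<^esub> a \<otimes>\<^bsub>A\<^esub> inv\<^bsub>A\<^esub> \<sigma> (inv\<^bsub>H\<^esub> h) h"
    have sc: "\<sigma> (inv\<^bsub>H\<^esub> h) h \<in> carrier A" "\<sigma> \<one>\<^bsub>H\<^esub> \<one>\<^bsub>H\<^esub> \<in> carrier A" using cc x by auto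
    have "\<sigma> (inv\<^bsub>H\<^esub> h) h \<otimes>\<^bsub>A\<^esub> b \<otimes>\<^bsub>A\<^esub> a
       = (\<sigma> (inv\<^bsub>H\<^esub> h) h \<otimes>\<^bsub>A\<^esub> inv\<^bsub>A\<^esub> \<sigma> (inv\<^bsub>H\<^esub> h) h) \<otimes>\<^bsub>A\<^esub> (a \<otimes>\<^bsub>A\<^esub> inv\<^bsub>A\<^esub> a) \<otimes>\<^bsub>A\<^esub> inv\<^bsub>A\<^esub> \<sigma> \<one>\<^bsub>H\<^esub> \<one>\<^bsub>H\<^esub>"
      unfolding b_def using sc x by (simp only: A.m_ac A.inv_closed A.m_closed)
    also have "\<dots> = inv\<^bsub>A\<^esub> \<sigma> \<one>\<^bsub>H\<^esub> \<one>\<^bsub>H\<^esub>" using sc x by (simp only: A.r_inv A.l_one A.one_closed A.inv_closed)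
    finally have "\<sigma> (inv\<^bsub>H\<^esub> h) h \<otimes>\<^bsub>A\<^esub> b \<otimes>\<^bsub>A\<^esub> a = inv\<^bsub>A\<^esub> \<sigma> \<one>\<^bsub>H\<^esub> \<one>\<^bsub>H\<^esub>" .
    moreover have "b \<in> carrier A" unfolding b_def using sc x by simp
    ultimately show ?thesis using x by (intro bexI[of _ "(inv\<^bsub>H\<^esub> h, b)"]) auto
  qed
qed

end



context hac begin

definition vals :: "('h \<Rightarrow> 'h \<Rightarrow> 'a) \<Rightarrow> bool" where
  "vals \<sigma> \<longleftrightarrow> (\<forall>h1\<in>carrier H. \<forall>h2\<in>carrier H. \<sigma> h1 h2 \<in> carrier A)"

lemma coc_vals: "cocycle2 H A \<sigma> \<Longrightarrow> vals \<sigma>" by (simp add: vals_def cocycle2_def)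

lemma cohE: assumes "cohomologous H A \<sigma> \<rho>"
  obtains f where "f \<in> carrier H \<rightarrow> carrier A"
    "\<And>h1 h2. h1 \<in> carrier H \<Longrightarrow> h2 \<in> carrier H \<Longrightarrow> \<rho> h1 h2 = \<sigma> h1 h2 \<otimes>\<^bsub>A\<^esub> inv\<^bsub>A\<^esub> (f (h1 \<otimes>\<^bsub>H\<^esub> h2)) \<otimes>\<^bsub>A\<^esub> f h1 \<otimes>\<^bsub>A\<^esub> f h2"
  using assms unfolding cohomologous_def by blast

lemma coh_refl: "vals \<sigma> \<Longrightarrow> cohomologous H A \<sigma> \<sigma>"
  unfolding cohomologous_def vals_def by (intro exI[of _ "\<lambda>_. \<one>\<^bsub>A\<^esub>"]) auto

lemma coh_sym: assumes v: "vals \<sigma>" and c: "cohomologous H A \<sigma> \<rho>" shows "cohomologous H A \<rho> \<sigma>"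
proof -
  obtain f where f: "f \<in> carrier H \<rightarrow> carrier A"
    "\<And>h1 h2. h1 \<in> carrier H \<Longrightarrow> h2 \<in> carrier H \<Longrightarrow> \<rho> h1 h2 = \<sigma> h1 h2 \<otimes>\<^bsub>A\<^esub> inv\<^bsub>A\<^esub> (f (h1 \<otimes>\<^bsub>H\<^esub> h2)) \<otimes>\<^bsub>A\<^esub> f h1 \<otimes>\<^bsub>A\<^esub> f h2"
    by (rule cohE[OF c]) blast
  show ?thesis unfolding cohomologous_def
  proof (intro exI[of _ "\<lambda>h. inv\<^bsub>A\<^esub> f h"] conjI ballI)
    show "(\<lambda>h. inv\<^bsub>A\<^esub> f h) \<in> carrier H \<rightarrow> carrier A" using f by auto
    fix h1 h2 assume h: "h1 \<in> carrier H" "h2 \<in> carrier H"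
    have m: "\<sigma> h1 h2 \<in> carrier A" "f h1 \<in> carrier A" "f h2 \<in> carrier A" "f (h1 \<otimes>\<^bsub>H\<^esub> h2) \<in> carrier A"
      using v f h by (auto simp: vals_def)
    have "\<rho> h1 h2 \<otimes>\<^bsub>A\<^esub> inv\<^bsub>A\<^esub> (inv\<^bsub>A\<^esub> f (h1 \<otimes>\<^bsub>H\<^esub> h2)) \<otimes>\<^bsub>A\<^esub> inv\<^bsub>A\<^esub> f h1 \<otimes>\<^bsub>A\<^esub> inv\<^bsub>A\<^esub> f h2
      = \<sigma> h1 h2 \<otimes>\<^bsub>A\<^esub> (inv\<^bsub>A\<^esub> (f (h1 \<otimes>\<^bsub>H\<^esub> h2)) \<otimes>\<^bsub>A\<^esub> f (h1 \<otimes>\<^bsub>H\<^esub> h2)) \<otimes>\<^bsub>A\<^esub> (f h1 \<otimes>\<^bsub>A\<^esub> inv\<^bsub>A\<^esub> f h1) \<otimes>\<^bsub>A\<^esub> (f h2 \<otimes>\<^bsub>A\<^esub> inv\<^bsub>A\<^esub> f h2)"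
      using m by (simp only: f(2)[OF h] A.inv_inv A.m_ac A.inv_closed A.m_closed)
    also have "\<dots> = \<sigma> h1 h2" using m by simp
    finally show "\<sigma> h1 h2 = \<rho> h1 h2 \<otimes>\<^bsub>A\<^esub> inv\<^bsub>A\<^esub> (inv\<^bsub>A\<^esub> f (h1 \<otimes>\<^bsub>H\<^esub> h2)) \<otimes>\<^bsub>A\<^esub> inv\<^bsub>A\<^esub> f h1 \<otimes>\<^bsub>A\<^esub> inv\<^bsub>A\<^esub> f h2"
      by simp
  qed
qed

lemma coh_trans: assumes v: "vals \<sigma>" and c1: "cohomologous H A \<sigma> \<rho>" and c2: "cohomologous H A \<rho> \<tau>"
  shows "cohomologous H A \<sigma> \<tau>"
proof -
  obtain f where f: "f \<in> carrier H \<rightarrow> carrier A"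
    "\<And>h1 h2. h1 \<in> carrier H \<Longrightarrow> h2 \<in> carrier H \<Longrightarrow> \<rho> h1 h2 = \<sigma> h1 h2 \<otimes>\<^bsub>A\<^esub> inv\<^bsub>A\<^esub> (f (h1 \<otimes>\<^bsub>H\<^esub> h2)) \<otimes>\<^bsub>A\<^esub> f h1 \<otimes>\<^bsub>A\<^esub> f h2"
    by (rule cohE[OF c1]) blast
  obtain g where g: "g \<in> carrier H \<rightarrow> carrier A"
    "\<And>h1 h2. h1 \<in> carrier H \<Longrightarrow> h2 \<in> carrier H \<Longrightarrow> \<tau> h1 h2 = \<rho> h1 h2 \<otimes>\<^bsub>A\<^esub> inv\<^bsub>A\<^esub> (g (h1 \<otimes>\<^bsub>H\<^esub> h2)) \<otimes>\<^bsub>A\<^esub> g h1 \<otimes>\<^bsub>A\<^esub> g h2"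
    by (rule cohE[OF c2]) blast
  show ?thesis unfolding cohomologous_def
  proof (intro exI[of _ "\<lambda>h. f h \<otimes>\<^bsub>A\<^esub> g h"] conjI ballI)
    show "(\<lambda>h. f h \<otimes>\<^bsub>A\<^esub> g h) \<in> carrier H \<rightarrow> carrier A" using f g by auto
    fix h1 h2 assume h: "h1 \<in> carrier H" "h2 \<in> carrier H"
    have m: "\<sigma> h1 h2 \<in> carrier A" "f h1 \<in> carrier A" "f h2 \<in> carrier A" "f (h1 \<otimes>\<^bsub>H\<^esub> h2) \<in> carrier A"
       "g h1 \<in> carrier A" "g h2 \<in> carrier A" "g (h1 \<otimes>\<^bsub>H\<^esub> h2) \<in> carrier A"
      using v f g h by (auto simp: vals_def)
    show "\<tau> h1 h2 = \<sigma> h1 h2 \<otimes>\<^bsub>A\<^esub> inv\<^bsub>A\<^esub> (f (h1 \<otimes>\<^bsub>H\<^esub> h2) \<otimes>\<^bsub>A\<^esub> g (h1 \<otimes>\<^bsub>H\<^esub> h2)) \<otimes>\<^bsub>A\<^esub> (f h1 \<otimes>\<^bsub>A\<^esub> g h1) \<otimes>\<^bsub>A\<^esub> (f h2 \<otimes>\<^bsub>A\<^esub> g h2)"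
      using m by (simp only: g(2)[OF h] f(2)[OF h] A.inv_mult A.m_ac A.inv_closed A.m_closed)
  qed
qed

lemma coh_class_eq: assumes "cocycle2 H A \<sigma>" "cocycle2 H A \<rho>" "cohomologous H A \<sigma> \<rho>"
  shows "coh_class H A \<sigma> = coh_class H A \<rho>"
  unfolding coh_class_def using assms coh_trans coh_sym coc_vals by blast

lemma coh_hom: assumes v: "vals \<sigma>" and c: "cohomologous H A \<sigma> \<rho>" and chi: "\<chi> \<in> hom A A"
  shows "cohomologous H A (\<lambda>h1 h2. \<chi> (\<sigma> h1 h2)) (\<lambda>h1 h2. \<chi> (\<rho> h1 h2))"
proof -
  obtain f where f: "f \<in> carrier H \<rightarrow> carrier A"
    "\<And>h1 h2. h1 \<in> carrier H \<Longrightarrow> h2 \<in> carrier H \<Longrightarrow> \<rho> h1 h2 = \<sigma> h1 h2 \<otimes>\<^bsub>A\<^esub> inv\<^bsub>A\<^esub> (f (h1 \<otimes>\<^bsub>H\<^esub> h2)) \<otimes>\<^bsub>A\<^esub> f h1 \<otimes>\<^bsub>A\<^esub> f h2"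
    by (rule cohE[OF c]) blast
  have gh: "group_hom A A \<chi>" using chi by (simp add: group_hom_def group_hom_axioms_def A.is_group)
  show ?thesis unfolding cohomologous_def
  proof (intro exI[of _ "\<lambda>h. \<chi> (f h)"] conjI ballI)
    show "(\<lambda>h. \<chi> (f h)) \<in> carrier H \<rightarrow> carrier A" using f(1) by (auto intro!: hom_in_carrier[OF chi])
    fix h1 h2 assume h: "h1 \<in> carrier H" "h2 \<in> carrier H"
    have m: "\<sigma> h1 h2 \<in> carrier A" "f h1 \<in> carrier A" "f h2 \<in> carrier A" "f (h1 \<otimes>\<^bsub>H\<^esub> h2) \<in> carrier A"
      using v f h by (auto simp: vals_def)
    show "\<chi> (\<rho> h1 h2) = \<chi> (\<sigma> h1 h2) \<otimes>\<^bsub>A\<^esub> inv\<^bsub>A\<^esub> \<chi> (f (h1 \<otimes>\<^bsub>H\<^esub> h2)) \<otimes>\<^bsub>A\<^esub> \<chi> (f h1) \<otimes>\<^bsub>A\<^esub> \<chi> (f h2)"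
      using m f(2)[OF h] by (simp add: group_hom.hom_mult[OF gh] group_hom.hom_inv[OF gh])
  qed
qed

lemma coh_cong: "cohomologous H A \<sigma> \<rho> \<Longrightarrow> (\<And>h1 h2. h1 \<in> carrier H \<Longrightarrow> h2 \<in> carrier H \<Longrightarrow> \<rho>' h1 h2 = \<rho> h1 h2)
   \<Longrightarrow> cohomologous H A \<sigma> \<rho>'"
  unfolding cohomologous_def by simp

lemma aut_cocycle: assumes c: "cocycle2 H A \<sigma>" and p: "\<psi>H \<in> hom H H" and q: "\<psi>A \<in> hom A A"
  shows "cocycle2 H A (aut_act \<psi>H \<psi>A \<sigma>)"
  unfolding cocycle2_def aut_act_def
proof (intro conjI ballI)
  fix h1 h2 assume h: "h1 \<in> carrier H" "h2 \<in> carrier H"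
  show "\<psi>A (\<sigma> (\<psi>H h1) (\<psi>H h2)) \<in> carrier A"
    using h p q c by (simp add: hom_in_carrier coc_carr)
next
  fix h1 h2 h3 assume h: "h1 \<in> carrier H" "h2 \<in> carrier H" "h3 \<in> carrier H"
  have k: "\<psi>H h1 \<in> carrier H" "\<psi>H h2 \<in> carrier H" "\<psi>H h3 \<in> carrier H"
    using h p by (auto simp: hom_in_carrier)
  have m: "\<And>x y. x \<in> carrier H \<Longrightarrow> y \<in> carrier H \<Longrightarrow> \<psi>H (x \<otimes>\<^bsub>H\<^esub> y) = \<psi>H x \<otimes>\<^bsub>H\<^esub> \<psi>H y"
    using p by (simp add: hom_mult)
  show "\<psi>A (\<sigma> (\<psi>H h1) (\<psi>H h2)) \<otimes>\<^bsub>A\<^esub> \<psi>A (\<sigma> (\<psi>H (h1 \<otimes>\<^bsub>H\<^esub> h2)) (\<psi>H h3)) =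
        \<psi>A (\<sigma> (\<psi>H h2) (\<psi>H h3)) \<otimes>\<^bsub>A\<^esub> \<psi>A (\<sigma> (\<psi>H h1) (\<psi>H (h2 \<otimes>\<^bsub>H\<^esub> h3)))"
    using coc_eq[OF c k] k h q c by (simp add: m coc_carr flip: hom_mult)
qed

end



context hac begin

lemma tw_coh_iso: assumes c: "cocycle2 H A \<sigma>" and ch: "cohomologous H A \<sigma> \<rho>"
  shows "tw H A \<sigma> \<cong> tw H A \<rho>"
proof -
  obtain f where f: "f \<in> carrier H \<rightarrow> carrier A"
    "\<And>h1 h2. h1 \<in> carrier H \<Longrightarrow> h2 \<in> carrier H \<Longrightarrow> \<rho> h1 h2 = \<sigma> h1 h2 \<otimes>\<^bsub>A\<^esub> inv\<^bsub>A\<^esub> (f (h1 \<otimes>\<^bsub>H\<^esub> h2)) \<otimes>\<^bsub>A\<^esub> f h1 \<otimes>\<^bsub>A\<^esub> f h2"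
    by (rule cohE[OF ch]) blast
  have fc: "\<And>h. h \<in> carrier H \<Longrightarrow> f h \<in> carrier A" using f(1) by auto
  note cc = coc_carr[OF c]
  define \<Phi> where "\<Phi> = (\<lambda>x::'h \<times> 'a. (fst x, snd x \<otimes>\<^bsub>A\<^esub> inv\<^bsub>A\<^esub> f (fst x)))"
  have "\<Phi> \<in> iso (tw H A \<sigma>) (tw H A \<rho>)"
    unfolding iso_iff
  proof (intro conjI)
    show "\<Phi> \<in> hom (tw H A \<sigma>) (tw H A \<rho>)"
    proof (rule homI)
      show "\<And>x. x \<in> carrier (tw H A \<sigma>) \<Longrightarrow> \<Phi> x \<in> carrier (tw H A \<rho>)"
        using fc by (auto simp: \<Phi>_def)
      fix x y assume xy: "x \<in> carrier (tw H A \<sigma>)" "y \<in> carrier (tw H A \<sigma>)"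
      obtain h1 a1 h2 a2 where e: "x = (h1,a1)" "y = (h2,a2)" and
        m: "h1 \<in> carrier H" "h2 \<in> carrier H" "a1 \<in> carrier A" "a2 \<in> carrier A"
        using xy by (cases x, cases y) auto
      have m2: "\<sigma> h1 h2 \<in> carrier A" "f h1 \<in> carrier A" "f h2 \<in> carrier A" "f (h1 \<otimes>\<^bsub>H\<^esub> h2) \<in> carrier A"
        using m cc fc by auto
      have "\<rho> h1 h2 \<otimes>\<^bsub>A\<^esub> (a1 \<otimes>\<^bsub>A\<^esub> inv\<^bsub>A\<^esub> f h1) \<otimes>\<^bsub>A\<^esub> (a2 \<otimes>\<^bsub>A\<^esub> inv\<^bsub>A\<^esub> f h2)
         = \<sigma> h1 h2 \<otimes>\<^bsub>A\<^esub> a1 \<otimes>\<^bsub>A\<^esub> a2 \<otimes>\<^bsub>A\<^esub> inv\<^bsub>A\<^esub> f (h1 \<otimes>\<^bsub>H\<^esub> h2) \<otimes>\<^bsub>A\<^esub> (f h1 \<otimes>\<^bsub>A\<^esub> inv\<^bsub>A\<^esub> f h1) \<otimes>\<^bsub>A\<^esub> (f h2 \<otimes>\<^bsub>A\<^esub> inv\<^bsub>A\<^esub> f h2)"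
        using m m2 by (simp only: f(2)[OF m(1,2)] A.m_ac A.inv_closed A.m_closed)
      also have "\<dots> = \<sigma> h1 h2 \<otimes>\<^bsub>A\<^esub> a1 \<otimes>\<^bsub>A\<^esub> a2 \<otimes>\<^bsub>A\<^esub> inv\<^bsub>A\<^esub> f (h1 \<otimes>\<^bsub>H\<^esub> h2)"
        using m m2 by simp
      finally show "\<Phi> (x \<otimes>\<^bsub>tw H A \<sigma>\<^esub> y) = \<Phi> x \<otimes>\<^bsub>tw H A \<rho>\<^esub> \<Phi> y"
        using e by (simp add: \<Phi>_def)
    qed
    show "\<Phi> ` carrier (tw H A \<sigma>) = carrier (tw H A \<rho>)"
    proof
      show "\<Phi> ` carrier (tw H A \<sigma>) \<subseteq> carrier (tw H A \<rho>)" using fc by (auto simp: \<Phi>_def)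
      show "carrier (tw H A \<rho>) \<subseteq> \<Phi> ` carrier (tw H A \<sigma>)"
      proof
        fix y assume "y \<in> carrier (tw H A \<rho>)"
        then obtain h b where y: "y = (h,b)" "h \<in> carrier H" "b \<in> carrier A" by (cases y) auto
        have "\<Phi> (h, b \<otimes>\<^bsub>A\<^esub> f h) = y" using y fc by (simp add: \<Phi>_def A.m_assoc)
        moreover have "(h, b \<otimes>\<^bsub>A\<^esub> f h) \<in> carrier (tw H A \<sigma>)" using y fc by simp
        ultimately show "y \<in> \<Phi> ` carrier (tw H A \<sigma>)" by force
      qed
    qed
    show "inj_on \<Phi> (carrier (tw H A \<sigma>))"
    proof (rule inj_onI)
      fix x y assume xy: "x \<in> carrier (tw H A \<sigma>)" "y \<in> carrier (tw H A \<sigma>)" "\<Phi> x = \<Phi> y"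
      obtain h1 a1 h2 a2 where e: "x = (h1,a1)" "y = (h2,a2)" and
        m: "h1 \<in> carrier H" "h2 \<in> carrier H" "a1 \<in> carrier A" "a2 \<in> carrier A"
        using xy by (cases x, cases y) auto
      have hh: "h1 = h2" and aa: "a1 \<otimes>\<^bsub>A\<^esub> inv\<^bsub>A\<^esub> f h1 = a2 \<otimes>\<^bsub>A\<^esub> inv\<^bsub>A\<^esub> f h2" using xy(3) e by (auto simp: \<Phi>_def)
      have "a1 = a2" using aa hh A.r_cancel[of "inv\<^bsub>A\<^esub> f h1" a1 a2] m fc by simp
      then show "x = y" using e hh by simp
    qed
  qed
  then show ?thesis by (rule is_isoI)
qed

lemma tw_aut_iso: assumes c: "cocycle2 H A \<sigma>" and p: "\<psi>H \<in> iso H H" and q: "\<psi>A \<in> iso A A"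
  shows "tw H A (aut_act \<psi>H \<psi>A \<sigma>) \<cong> tw H A \<sigma>"
proof -
  define \<chi> where "\<chi> = inv_into (carrier A) \<psi>A"
  have chi: "\<chi> \<in> iso A A" unfolding \<chi>_def by (rule A.iso_set_sym[OF q])
  have chih: "\<chi> \<in> hom A A" using chi by (simp add: iso_iff)
  have qinj: "inj_on \<psi>A (carrier A)" using q by (simp add: iso_iff)
  have chiq: "\<And>a. a \<in> carrier A \<Longrightarrow> \<chi> (\<psi>A a) = a" unfolding \<chi>_def using qinj by simp
  have qc: "\<And>a. a \<in> carrier A \<Longrightarrow> \<psi>A a \<in> carrier A" by (rule hom_in_carrier[OF iso_imp_homomorphism[OF q]])
  have pc: "\<And>h. h \<in> carrier H \<Longrightarrow> \<psi>H h \<in> carrier H" by (rule hom_in_carrier[OF iso_imp_homomorphism[OF p]])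
  have chic: "\<And>a. a \<in> carrier A \<Longrightarrow> \<chi> a \<in> carrier A" by (rule hom_in_carrier[OF chih])
  note cc = coc_carr[OF c]
  have pim: "\<psi>H ` carrier H = carrier H" using p by (simp add: iso_iff)
  have cim: "\<chi> ` carrier A = carrier A" using chi by (simp add: iso_iff)
  define \<Phi> where "\<Phi> = (\<lambda>x::'h \<times> 'a. (\<psi>H (fst x), \<chi> (snd x)))"
  have "\<Phi> \<in> iso (tw H A (aut_act \<psi>H \<psi>A \<sigma>)) (tw H A \<sigma>)"
    unfolding iso_iff
  proof (intro conjI)
    show "\<Phi> \<in> hom (tw H A (aut_act \<psi>H \<psi>A \<sigma>)) (tw H A \<sigma>)"
    proof (rule homI)
      show "\<And>x. x \<in> carrier (tw H A (aut_act \<psi>H \<psi>A \<sigma>)) \<Longrightarrow> \<Phi> x \<in> carrier (tw H A \<sigma>)"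
        using pc chic by (auto simp: \<Phi>_def)
      fix x y assume xy: "x \<in> carrier (tw H A (aut_act \<psi>H \<psi>A \<sigma>))" "y \<in> carrier (tw H A (aut_act \<psi>H \<psi>A \<sigma>))"
      obtain h1 a1 h2 a2 where e: "x = (h1,a1)" "y = (h2,a2)" and
        m: "h1 \<in> carrier H" "h2 \<in> carrier H" "a1 \<in> carrier A" "a2 \<in> carrier A"
        using xy by (cases x, cases y) auto
      have "\<chi> (\<psi>A (\<sigma> (\<psi>H h1) (\<psi>H h2)) \<otimes>\<^bsub>A\<^esub> a1 \<otimes>\<^bsub>A\<^esub> a2) = \<sigma> (\<psi>H h1) (\<psi>H h2) \<otimes>\<^bsub>A\<^esub> \<chi> a1 \<otimes>\<^bsub>A\<^esub> \<chi> a2"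
        using m pc cc qc chiq by (simp add: hom_mult[OF chih])
      moreover have "\<psi>H (h1 \<otimes>\<^bsub>H\<^esub> h2) = \<psi>H h1 \<otimes>\<^bsub>H\<^esub> \<psi>H h2"
        using m by (simp add: hom_mult[OF iso_imp_homomorphism[OF p]])
      ultimately show "\<Phi> (x \<otimes>\<^bsub>tw H A (aut_act \<psi>H \<psi>A \<sigma>)\<^esub> y) = \<Phi> x \<otimes>\<^bsub>tw H A \<sigma>\<^esub> \<Phi> y"
        using e by (simp add: \<Phi>_def aut_act_def)
    qed
    show "\<Phi> ` carrier (tw H A (aut_act \<psi>H \<psi>A \<sigma>)) = carrier (tw H A \<sigma>)"
    proof
      show "\<Phi> ` carrier (tw H A (aut_act \<psi>H \<psi>A \<sigma>)) \<subseteq> carrier (tw H A \<sigma>)"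
        using pc chic by (auto simp: \<Phi>_def)
      show "carrier (tw H A \<sigma>) \<subseteq> \<Phi> ` carrier (tw H A (aut_act \<psi>H \<psi>A \<sigma>))"
      proof
        fix y assume "y \<in> carrier (tw H A \<sigma>)"
        then obtain k b where y: "y = (k,b)" "k \<in> carrier H" "b \<in> carrier A" by (cases y) auto
        obtain h where h: "h \<in> carrier H" "k = \<psi>H h" using pim y(2) by blast
        obtain a where a: "a \<in> carrier A" "b = \<chi> a" using cim y(3) by blast
        have "\<Phi> (h, a) = y" using y h a by (simp add: \<Phi>_def)
        moreover have "(h, a) \<in> carrier (tw H A (aut_act \<psi>H \<psi>A \<sigma>))" using h a by simp
        ultimately show "y \<in> \<Phi> ` carrier (tw H A (aut_act \<psi>H \<psi>A \<sigma>))" by (metis image_eqI)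
      qed
    qed
    have pinj: "inj_on \<psi>H (carrier H)" using p by (simp add: iso_iff)
    have cinj: "inj_on \<chi> (carrier A)" using chi by (simp add: iso_iff)
    show "inj_on \<Phi> (carrier (tw H A (aut_act \<psi>H \<psi>A \<sigma>)))"
    proof (rule inj_onI)
      fix x y assume xy: "x \<in> carrier (tw H A (aut_act \<psi>H \<psi>A \<sigma>))" "y \<in> carrier (tw H A (aut_act \<psi>H \<psi>A \<sigma>))" "\<Phi> x = \<Phi> y"
      obtain h1 a1 h2 a2 where e: "x = (h1,a1)" "y = (h2,a2)" and
        m: "h1 \<in> carrier H" "h2 \<in> carrier H" "a1 \<in> carrier A" "a2 \<in> carrier A"
        using xy by (cases x, cases y) auto
      have "\<psi>H h1 = \<psi>H h2" "\<chi> a1 = \<chi> a2" using xy(3) e by (auto simp: \<Phi>_def)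
      then have "h1 = h2" "a1 = a2" using pinj cinj m by (auto dest: inj_onD)
      then show "x = y" using e by simp
    qed
  qed
  then show ?thesis by (rule is_isoI)
qed

end



sublocale cext \<subseteq> hac H A by unfold_locales

context cext begin

lemma ext_iso: "(\<lambda>x. s (fst x) \<otimes>\<^bsub>G\<^esub> \<iota> (snd x)) \<in> iso (tw H A \<sigma>) G"
  (is "?\<Phi> \<in> _")
  unfolding iso_iff
proof (intro conjI)
  show "?\<Phi> \<in> hom (tw H A \<sigma>) G"
  proof (rule homI)
    show "\<And>x. x \<in> carrier (tw H A \<sigma>) \<Longrightarrow> ?\<Phi> x \<in> carrier G" by auto
    fix x y assume xy: "x \<in> carrier (tw H A \<sigma>)" "y \<in> carrier (tw H A \<sigma>)"
    obtain h1 a1 h2 a2 where e: "x = (h1,a1)" "y = (h2,a2)" and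
      m: "h1 \<in> carrier H" "h2 \<in> carrier H" "a1 \<in> carrier A" "a2 \<in> carrier A"
      using xy by (cases x, cases y) auto
    have "s h1 \<otimes>\<^bsub>G\<^esub> \<iota> a1 \<otimes>\<^bsub>G\<^esub> (s h2 \<otimes>\<^bsub>G\<^esub> \<iota> a2) = s h1 \<otimes>\<^bsub>G\<^esub> (\<iota> a1 \<otimes>\<^bsub>G\<^esub> s h2) \<otimes>\<^bsub>G\<^esub> \<iota> a2"
      using m by (simp add: G.m_assoc)
    also have "\<dots> = s h1 \<otimes>\<^bsub>G\<^esub> (s h2 \<otimes>\<^bsub>G\<^esub> \<iota> a1) \<otimes>\<^bsub>G\<^esub> \<iota> a2"
      using m iota_comm[of a1 "s h2"] by simp
    also have "\<dots> = (s h1 \<otimes>\<^bsub>G\<^esub> s h2) \<otimes>\<^bsub>G\<^esub> (\<iota> a1 \<otimes>\<^bsub>G\<^esub> \<iota> a2)"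
      using m by (simp add: G.m_assoc)
    also have "\<dots> = s (h1 \<otimes>\<^bsub>H\<^esub> h2) \<otimes>\<^bsub>G\<^esub> \<iota> (\<sigma> h1 h2 \<otimes>\<^bsub>A\<^esub> a1 \<otimes>\<^bsub>A\<^esub> a2)"
      using m by (simp add: key iota_mult G.m_assoc)
    finally show "?\<Phi> (x \<otimes>\<^bsub>tw H A \<sigma>\<^esub> y) = ?\<Phi> x \<otimes>\<^bsub>G\<^esub> ?\<Phi> y" using e by simp
  qed
  show "?\<Phi> ` carrier (tw H A \<sigma>) = carrier G"
  proof
    show "?\<Phi> ` carrier (tw H A \<sigma>) \<subseteq> carrier G" by auto
    show "carrier G \<subseteq> ?\<Phi> ` carrier (tw H A \<sigma>)"
    proof
      fix g assume g: "g \<in> carrier G"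
      obtain a where a: "a \<in> carrier A" "g = s (\<pi> g) \<otimes>\<^bsub>G\<^esub> \<iota> a" using decomp[OF g] by blast
      show "g \<in> ?\<Phi> ` carrier (tw H A \<sigma>)"
      proof (rule image_eqI)
        show "g = ?\<Phi> (\<pi> g, a)" using a by simp
        show "(\<pi> g, a) \<in> carrier (tw H A \<sigma>)" using a g by simp
      qed
    qed
  qed
  show "inj_on ?\<Phi> (carrier (tw H A \<sigma>))"
  proof (rule inj_onI)
    fix x y assume xy: "x \<in> carrier (tw H A \<sigma>)" "y \<in> carrier (tw H A \<sigma>)" "?\<Phi> x = ?\<Phi> y"
    obtain h1 a1 h2 a2 where e: "x = (h1,a1)" "y = (h2,a2)" and
      m: "h1 \<in> carrier H" "h2 \<in> carrier H" "a1 \<in> carrier A" "a2 \<in> carrier A"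
      using xy by (cases x, cases y) auto
    have eq: "s h1 \<otimes>\<^bsub>G\<^esub> \<iota> a1 = s h2 \<otimes>\<^bsub>G\<^esub> \<iota> a2" using xy(3) e by simp
    have "\<pi> (s h1 \<otimes>\<^bsub>G\<^esub> \<iota> a1) = h1" using m by (simp add: pi_mult)
    moreover have "\<pi> (s h2 \<otimes>\<^bsub>G\<^esub> \<iota> a2) = h2" using m by (simp add: pi_mult)
    ultimately have hh: "h1 = h2" using eq by simp
    then have "\<iota> a1 = \<iota> a2" using eq m G.l_cancel[of "s h1" "\<iota> a1" "\<iota> a2"] by simp
    then have "a1 = a2" using m iota_inj by blast
    then show "x = y" using e hh by simp
  qed
qed

lemma tw_iso_G: "tw H A \<sigma> \<cong> G" using ext_iso by (rule is_isoI)

end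




lemma center_pres:
  assumes G': "group G'" and G: "group G" and phi: "\<phi> \<in> iso G' G" and z: "z \<in> group_center G'"
  shows "\<phi> z \<in> group_center G"
proof -
  have h: "\<phi> \<in> hom G' G" using phi by (simp add: iso_iff)
  have im: "\<phi> ` carrier G' = carrier G" using phi by (simp add: iso_iff)
  have zc: "z \<in> carrier G'" using z by (simp add: group_center_def)
  have "\<phi> z \<otimes>\<^bsub>G\<^esub> g = g \<otimes>\<^bsub>G\<^esub> \<phi> z" if g: "g \<in> carrier G" for g
  proof -
    obtain x where x: "x \<in> carrier G'" "g = \<phi> x" using im g by blast
    have "\<phi> z \<otimes>\<^bsub>G\<^esub> \<phi> x = \<phi> (z \<otimes>\<^bsub>G'\<^esub> x)" using zc x h by (simp add: hom_mult)
    also have "\<dots> = \<phi> (x \<otimes>\<^bsub>G'\<^esub> z)" using z x unfolding group_center_def by auto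
    also have "\<dots> = \<phi> x \<otimes>\<^bsub>G\<^esub> \<phi> z" using zc x h by (simp add: hom_mult)
    finally show ?thesis using x by simp
  qed
  moreover have "\<phi> z \<in> carrier G" using zc h by (simp add: hom_in_carrier)
  ultimately show ?thesis unfolding group_center_def by blast
qed

lemma center_refl:
  assumes G': "group G'" and G: "group G" and phi: "\<phi> \<in> iso G' G" and y: "y \<in> carrier G'"
    and z: "\<phi> y \<in> group_center G"
  shows "y \<in> group_center G'"
proof -
  have "inv_into (carrier G') \<phi> \<in> iso G G'" using group.iso_set_sym[OF G' phi] .
  then have "inv_into (carrier G') \<phi> (\<phi> y) \<in> group_center G'"
    by (rule center_pres[OF G G' _ z])
  moreover have "inj_on \<phi> (carrier G')" using phi by (simp add: iso_iff)
  ultimately show ?thesis using y by simp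
qed




lemma transport:
  assumes C: "cext G A H \<iota> \<pi> s \<sigma>" and C': "cext G' A H \<iota>' \<pi>' s' \<sigma>'" and phi: "\<phi> \<in> iso G' G"
  shows "\<exists>\<psi>H\<in>iso H H. \<exists>\<psi>A\<in>iso A A. cohomologous H A (aut_act \<psi>H (\<lambda>x. x) \<sigma>) (aut_act (\<lambda>x. x) \<psi>A \<sigma>')"
proof -
  interpret C: cext G A H \<iota> \<pi> s \<sigma> by (rule C)
  interpret C': cext G' A H \<iota>' \<pi>' s' \<sigma>' by (rule C')
  have ph: "\<phi> \<in> hom G' G" using phi by (simp add: iso_iff)
  have pim: "\<phi> ` carrier G' = carrier G" using phi by (simp add: iso_iff)
  have pinj: "inj_on \<phi> (carrier G')" using phi by (simp add: iso_iff)
  have pc[simp]: "\<And>x. x \<in> carrier G' \<Longrightarrow> \<phi> x \<in> carrier G" by (rule hom_in_carrier[OF ph])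
  have pm: "\<And>x y. x \<in> carrier G' \<Longrightarrow> y \<in> carrier G' \<Longrightarrow> \<phi> (x \<otimes>\<^bsub>G'\<^esub> y) = \<phi> x \<otimes>\<^bsub>G\<^esub> \<phi> y"
    by (rule hom_mult[OF ph])
  have pgh: "group_hom G' G \<phi>" using ph by (simp add: group_hom_def group_hom_axioms_def C.G.is_group C'.G.is_group)
  have pinv: "\<And>x. x \<in> carrier G' \<Longrightarrow> \<phi> (inv\<^bsub>G'\<^esub> x) = inv\<^bsub>G\<^esub> \<phi> x" by (rule group_hom.hom_inv[OF pgh])
  have cen: "\<And>a. a \<in> carrier A \<Longrightarrow> \<phi> (\<iota>' a) \<in> group_center G"
    using center_pres[OF C'.G.is_group C.G.is_group phi] C'.center_iff by blast
  have iinj: "inj_on \<iota> (carrier A)" using C.iota_inj by (meson inj_onI)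
  define \<psi>A where "\<psi>A = (\<lambda>a. inv_into (carrier A) \<iota> (\<phi> (\<iota>' a)))"
  have psiA: "\<And>a. a \<in> carrier A \<Longrightarrow> \<psi>A a \<in> carrier A \<and> \<iota> (\<psi>A a) = \<phi> (\<iota>' a)"
  proof -
    fix a assume a: "a \<in> carrier A"
    obtain b where b: "b \<in> carrier A" "\<phi> (\<iota>' a) = \<iota> b" using cen[OF a] C.center_iff by blast
    then have "\<psi>A a = b" unfolding \<psi>A_def using inv_into_f_f[OF iinj b(1)] by simp
    then show "\<psi>A a \<in> carrier A \<and> \<iota> (\<psi>A a) = \<phi> (\<iota>' a)" using b by simp
  qed
  have pi_phi_iota: "\<pi> (\<phi> (\<iota>' a)) = \<one>\<^bsub>H\<^esub>" if a: "a \<in> carrier A" for a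
    using psiA[OF a] C.pi_iota[of "\<psi>A a"] by simp
  define \<psi>H where "\<psi>H = (\<lambda>k. \<pi> (\<phi> (s' k)))"
  have psiHc: "\<And>k. k \<in> carrier H \<Longrightarrow> \<psi>H k \<in> carrier H" unfolding \<psi>H_def by simp
  have psiH_mult: "\<And>k1 k2. k1 \<in> carrier H \<Longrightarrow> k2 \<in> carrier H \<Longrightarrow> \<psi>H (k1 \<otimes>\<^bsub>H\<^esub> k2) = \<psi>H k1 \<otimes>\<^bsub>H\<^esub> \<psi>H k2"
  proof -
    fix k1 k2 assume k: "k1 \<in> carrier H" "k2 \<in> carrier H"
    have "\<psi>H k1 \<otimes>\<^bsub>H\<^esub> \<psi>H k2 = \<pi> (\<phi> (s' k1 \<otimes>\<^bsub>G'\<^esub> s' k2))"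
      unfolding \<psi>H_def using k by (simp add: pm C.pi_mult)
    also have "\<dots> = \<pi> (\<phi> (s' (k1 \<otimes>\<^bsub>H\<^esub> k2))) \<otimes>\<^bsub>H\<^esub> \<pi> (\<phi> (\<iota>' (\<sigma>' k1 k2)))"
      using k by (simp add: C'.key pm C.pi_mult)
    also have "\<dots> = \<psi>H (k1 \<otimes>\<^bsub>H\<^esub> k2)" unfolding \<psi>H_def using k pi_phi_iota by simp
    finally show "\<psi>H (k1 \<otimes>\<^bsub>H\<^esub> k2) = \<psi>H k1 \<otimes>\<^bsub>H\<^esub> \<psi>H k2" by simp
  qed
  have psiH_hom: "\<psi>H \<in> hom H H" by (rule homI) (simp_all add: psiHc psiH_mult)
  have psiH_iso: "\<psi>H \<in> iso H H"
    unfolding iso_iff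
  proof (intro conjI psiH_hom)
    show "\<psi>H ` carrier H = carrier H"
    proof
      show "\<psi>H ` carrier H \<subseteq> carrier H" using psiHc by auto
      show "carrier H \<subseteq> \<psi>H ` carrier H"
      proof
        fix k assume k: "k \<in> carrier H"
        obtain g where g: "g \<in> carrier G" "k = \<pi> g" using C.pi_surj k by blast
        obtain y where y: "y \<in> carrier G'" "g = \<phi> y" using pim g by blast
        define k' where "k' = \<pi>' y"
        have k': "k' \<in> carrier H" unfolding k'_def using y by simp
        obtain a where a: "a \<in> carrier A" "y = s' k' \<otimes>\<^bsub>G'\<^esub> \<iota>' a" using C'.decomp[OF y(1)] unfolding k'_def by blast
        have "k = \<pi> (\<phi> (s' k' \<otimes>\<^bsub>G'\<^esub> \<iota>' a))" using g y a by simp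
        also have "\<dots> = \<pi> (\<phi> (s' k')) \<otimes>\<^bsub>H\<^esub> \<pi> (\<phi> (\<iota>' a))"
          using a k' by (simp add: pm C.pi_mult)
        also have "\<dots> = \<psi>H k'" using a k' unfolding \<psi>H_def by (simp add: pi_phi_iota)
        finally show "k \<in> \<psi>H ` carrier H" using k' by simp
      qed
    qed
    show "inj_on \<psi>H (carrier H)"
    proof (rule inj_onI)
      fix k1 k2 assume k: "k1 \<in> carrier H" "k2 \<in> carrier H" "\<psi>H k1 = \<psi>H k2"
      define x where "x = inv\<^bsub>G'\<^esub> s' k1 \<otimes>\<^bsub>G'\<^esub> s' k2"
      have xc: "x \<in> carrier G'" unfolding x_def using k by simp
      have "\<pi> (\<phi> x) = inv\<^bsub>H\<^esub> \<psi>H k1 \<otimes>\<^bsub>H\<^esub> \<psi>H k2"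
        unfolding x_def \<psi>H_def using k by (simp add: pm pinv C.pi_mult C.pi_inv)
      also have "\<dots> = \<one>\<^bsub>H\<^esub>" using k psiHc by simp
      finally have "\<phi> x \<in> group_center G"
        using C.ker C.iota_img xc unfolding kernel_def by auto
      then have "x \<in> group_center G'" using center_refl[OF C'.G.is_group C.G.is_group phi xc] by blast
      then obtain a where a: "a \<in> carrier A" "x = \<iota>' a" using C'.center_iff by blast
      have "inv\<^bsub>H\<^esub> k1 \<otimes>\<^bsub>H\<^esub> k2 = \<pi>' x" unfolding x_def using k by (simp add: C'.pi_mult C'.pi_inv)
      also have "\<dots> = \<one>\<^bsub>H\<^esub>" using a by simp
      finally have "inv\<^bsub>H\<^esub> k1 \<otimes>\<^bsub>H\<^esub> k2 = \<one>\<^bsub>H\<^esub>" .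
      then have "k2 = k1 \<otimes>\<^bsub>H\<^esub> \<one>\<^bsub>H\<^esub>" using k C.H.inv_solve_left'[of "\<one>\<^bsub>H\<^esub>" k1 k2] by simp
      then show "k1 = k2" using k by simp
    qed
  qed
  have psiA_mult: "\<And>a b. a \<in> carrier A \<Longrightarrow> b \<in> carrier A \<Longrightarrow> \<psi>A (a \<otimes>\<^bsub>A\<^esub> b) = \<psi>A a \<otimes>\<^bsub>A\<^esub> \<psi>A b"
  proof -
    fix a b assume ab: "a \<in> carrier A" "b \<in> carrier A"
    have "\<iota> (\<psi>A (a \<otimes>\<^bsub>A\<^esub> b)) = \<iota> (\<psi>A a \<otimes>\<^bsub>A\<^esub> \<psi>A b)"
      using ab psiA by (simp add: C.iota_mult C'.iota_mult pm)
    then show "\<psi>A (a \<otimes>\<^bsub>A\<^esub> b) = \<psi>A a \<otimes>\<^bsub>A\<^esub> \<psi>A b" using ab psiA C.iota_inj by simp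
  qed
  have psiA_hom: "\<psi>A \<in> hom A A" by (rule homI) (simp_all add: psiA psiA_mult)
  have psiA_iso: "\<psi>A \<in> iso A A"
    unfolding iso_iff
  proof (intro conjI psiA_hom)
    show "\<psi>A ` carrier A = carrier A"
    proof
      show "\<psi>A ` carrier A \<subseteq> carrier A" using psiA by auto
      show "carrier A \<subseteq> \<psi>A ` carrier A"
      proof
        fix b assume b: "b \<in> carrier A"
        have "\<iota> b \<in> \<phi> ` carrier G'" using b pim by simp
        then obtain y where y: "y \<in> carrier G'" "\<iota> b = \<phi> y" by blast
        have "\<iota> b \<in> group_center G" using b C.iota_img by blast
        then have "\<phi> y \<in> group_center G" using y(2) by simp
        then have "y \<in> group_center G'" by (rule center_refl[OF C'.G.is_group C.G.is_group phi y(1)])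
        then obtain a where a: "a \<in> carrier A" "y = \<iota>' a" using C'.center_iff by blast
        have "\<iota> (\<psi>A a) = \<iota> b" using psiA[OF a(1)] a y by simp
        then have "\<psi>A a = b" using psiA[OF a(1)] b C.iota_inj by blast
        then show "b \<in> \<psi>A ` carrier A" using a by blast
      qed
    qed
    show "inj_on \<psi>A (carrier A)"
    proof (rule inj_onI)
      fix a b assume ab: "a \<in> carrier A" "b \<in> carrier A" "\<psi>A a = \<psi>A b"
      have "\<phi> (\<iota>' a) = \<iota> (\<psi>A a)" using psiA[OF ab(1)] by simp
      also have "\<dots> = \<iota> (\<psi>A b)" using ab(3) by simp
      also have "\<dots> = \<phi> (\<iota>' b)" using psiA[OF ab(2)] by simp
      finally have "\<phi> (\<iota>' a) = \<phi> (\<iota>' b)" .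
      then have "\<iota>' a = \<iota>' b" by (rule inj_onD[OF pinj _ C'.iota_carr[OF ab(1)] C'.iota_carr[OF ab(2)]])
      then show "a = b" using ab C'.iota_inj by blast
    qed
  qed
  define g where "g = (\<lambda>k. inv_into (carrier A) \<iota> (inv\<^bsub>G\<^esub> s (\<psi>H k) \<otimes>\<^bsub>G\<^esub> \<phi> (s' k)))"
  have gprop: "\<And>k. k \<in> carrier H \<Longrightarrow> g k \<in> carrier A \<and> \<phi> (s' k) = s (\<psi>H k) \<otimes>\<^bsub>G\<^esub> \<iota> (g k)"
  proof -
    fix k assume k: "k \<in> carrier H"
    have "\<pi> (inv\<^bsub>G\<^esub> s (\<psi>H k) \<otimes>\<^bsub>G\<^esub> \<phi> (s' k)) = \<one>\<^bsub>H\<^esub>"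
      using k psiHc by (simp add: C.pi_mult C.pi_inv \<psi>H_def)
    then obtain b where b: "b \<in> carrier A" "inv\<^bsub>G\<^esub> s (\<psi>H k) \<otimes>\<^bsub>G\<^esub> \<phi> (s' k) = \<iota> b"
      using C.ker_ex k psiHc by (meson C'.s_carr C.G.inv_closed C.G.m_closed C.s_carr pc)
    have "g k = b" unfolding g_def using b inv_into_f_f[OF iinj b(1)] by simp
    moreover have "\<phi> (s' k) = s (\<psi>H k) \<otimes>\<^bsub>G\<^esub> \<iota> b"
      using b k psiHc C.G.inv_solve_left'[of "\<iota> b" "s (\<psi>H k)" "\<phi> (s' k)"] by simp
    ultimately show "g k \<in> carrier A \<and> \<phi> (s' k) = s (\<psi>H k) \<otimes>\<^bsub>G\<^esub> \<iota> (g k)" using b by simp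
  qed
  have "cohomologous H A (aut_act \<psi>H (\<lambda>x. x) \<sigma>) (aut_act (\<lambda>x. x) \<psi>A \<sigma>')"
    unfolding cohomologous_def aut_act_def
  proof (intro exI[of _ g] conjI ballI)
    show "g \<in> carrier H \<rightarrow> carrier A" using gprop by auto
    fix k1 k2 assume k: "k1 \<in> carrier H" "k2 \<in> carrier H"
    have k12: "k1 \<otimes>\<^bsub>H\<^esub> k2 \<in> carrier H" using k by simp
    have gc: "g k1 \<in> carrier A" "g k2 \<in> carrier A" "g (k1 \<otimes>\<^bsub>H\<^esub> k2) \<in> carrier A" using gprop k k12 by auto
    have pk: "\<psi>H k1 \<in> carrier H" "\<psi>H k2 \<in> carrier H" using psiHc k by auto
    have "\<iota> (\<psi>A (\<sigma>' k1 k2)) = \<phi> (\<iota>' (\<sigma>' k1 k2))" using psiA k by simp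
    also have "\<dots> = inv\<^bsub>G\<^esub> \<phi> (s' (k1 \<otimes>\<^bsub>H\<^esub> k2)) \<otimes>\<^bsub>G\<^esub> \<phi> (s' k1) \<otimes>\<^bsub>G\<^esub> \<phi> (s' k2)"
      using k by (simp add: C'.sigma_def pm pinv)
    also have "\<dots> = inv\<^bsub>G\<^esub> (s (\<psi>H (k1 \<otimes>\<^bsub>H\<^esub> k2)) \<otimes>\<^bsub>G\<^esub> \<iota> (g (k1 \<otimes>\<^bsub>H\<^esub> k2))) \<otimes>\<^bsub>G\<^esub> (s (\<psi>H k1) \<otimes>\<^bsub>G\<^esub> \<iota> (g k1)) \<otimes>\<^bsub>G\<^esub> (s (\<psi>H k2) \<otimes>\<^bsub>G\<^esub> \<iota> (g k2))"
      using gprop k k12 by simp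
    also have "\<dots> = inv\<^bsub>G\<^esub> s (\<psi>H k1 \<otimes>\<^bsub>H\<^esub> \<psi>H k2) \<otimes>\<^bsub>G\<^esub> s (\<psi>H k1) \<otimes>\<^bsub>G\<^esub> s (\<psi>H k2) \<otimes>\<^bsub>G\<^esub> \<iota> (inv\<^bsub>A\<^esub> g (k1 \<otimes>\<^bsub>H\<^esub> k2) \<otimes>\<^bsub>A\<^esub> g k1 \<otimes>\<^bsub>A\<^esub> g k2)"
      using C.central3 k12 pk gc psiHc psiH_mult[OF k] by simp
    also have "\<dots> = \<iota> (\<sigma> (\<psi>H k1) (\<psi>H k2) \<otimes>\<^bsub>A\<^esub> (inv\<^bsub>A\<^esub> g (k1 \<otimes>\<^bsub>H\<^esub> k2) \<otimes>\<^bsub>A\<^esub> g k1 \<otimes>\<^bsub>A\<^esub> g k2))"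
      using pk gc by (simp add: C.sigma_def C.iota_mult)
    finally have "\<psi>A (\<sigma>' k1 k2) = \<sigma> (\<psi>H k1) (\<psi>H k2) \<otimes>\<^bsub>A\<^esub> (inv\<^bsub>A\<^esub> g (k1 \<otimes>\<^bsub>H\<^esub> k2) \<otimes>\<^bsub>A\<^esub> g k1 \<otimes>\<^bsub>A\<^esub> g k2)"
      using C.iota_inj psiA k pk gc by simp
    then show "\<psi>A (\<sigma>' k1 k2) = \<sigma> (\<psi>H k1) (\<psi>H k2) \<otimes>\<^bsub>A\<^esub> inv\<^bsub>A\<^esub> g (k1 \<otimes>\<^bsub>H\<^esub> k2) \<otimes>\<^bsub>A\<^esub> g k1 \<otimes>\<^bsub>A\<^esub> g k2"
      using pk gc by (simp add: C.A.m_assoc)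
  qed
  then show ?thesis using psiH_iso psiA_iso by blast
qed




lemma mk_cext: "group G \<Longrightarrow> comm_group A \<Longrightarrow> group H \<Longrightarrow> center_extension G A H \<iota> \<pi> \<Longrightarrow>
   extension_cocycle G A H \<iota> \<pi> s \<sigma> \<Longrightarrow> cext G A H \<iota> \<pi> s \<sigma>"
  by (simp add: cext_def cext_axioms_def)

lemma assoc_cext: "group G \<Longrightarrow> comm_group A \<Longrightarrow> group H \<Longrightarrow> assoc_cocycle G A H \<sigma> \<Longrightarrow>
   \<exists>\<iota> \<pi> s. cext G A H \<iota> \<pi> s \<sigma>"
  unfolding assoc_cocycle_def using mk_cext by blast

lemma center_normal: fixes G (structure) assumes G: "group G" shows "group_center G \<lhd> G"
proof -
  interpret group G by (rule G)
  let ?Z = "group_center G"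
  have sub: "subgroup ?Z G"
  proof (rule subgroupI)
    show "?Z \<subseteq> carrier G" unfolding group_center_def by auto
    show "?Z \<noteq> {}" unfolding group_center_def by (auto intro!: exI[of _ \<one>])
    show "inv a \<in> ?Z" if a: "a \<in> ?Z" for a
    proof -
      have ac: "a \<in> carrier G" and ca: "\<And>g. g \<in> carrier G \<Longrightarrow> a \<otimes> g = g \<otimes> a"
        using a unfolding group_center_def by auto
      have "inv a \<otimes> g = g \<otimes> inv a" if g: "g \<in> carrier G" for g
      proof -
        have "inv a \<otimes> g = inv a \<otimes> (g \<otimes> a) \<otimes> inv a" using ac g by (simp add: m_assoc)
        also have "\<dots> = inv a \<otimes> (a \<otimes> g) \<otimes> inv a" using ca g by simp
        also have "\<dots> = g \<otimes> inv a" using ac g by (simp add: m_assoc[symmetric])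
        finally show ?thesis .
      qed
      then show ?thesis using ac unfolding group_center_def by auto
    qed
    show "a \<otimes> b \<in> ?Z" if ab: "a \<in> ?Z" "b \<in> ?Z" for a b
    proof -
      have c: "a \<in> carrier G" "b \<in> carrier G" and ca: "\<And>g. g \<in> carrier G \<Longrightarrow> a \<otimes> g = g \<otimes> a"
        and cb: "\<And>g. g \<in> carrier G \<Longrightarrow> b \<otimes> g = g \<otimes> b"
        using ab unfolding group_center_def by auto
      have "a \<otimes> b \<otimes> g = g \<otimes> (a \<otimes> b)" if g: "g \<in> carrier G" for g
      proof -
        have "a \<otimes> b \<otimes> g = a \<otimes> (g \<otimes> b)" using c g cb by (simp add: m_assoc)
        also have "\<dots> = (g \<otimes> a) \<otimes> b" using c g ca by (simp add: m_assoc[symmetric])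
        finally show ?thesis using c g by (simp add: m_assoc)
      qed
      then show ?thesis using c unfolding group_center_def by auto
    qed
  qed
  show ?thesis unfolding normal_inv_iff
  proof (intro conjI sub ballI)
    fix x h assume x: "x \<in> carrier G" and h: "h \<in> ?Z"
    have hc: "h \<in> carrier G" and ch: "x \<otimes> h = h \<otimes> x" using h x unfolding group_center_def by auto
    have "x \<otimes> h \<otimes> inv x = h" using ch x hc by (simp add: m_assoc)
    then show "x \<otimes> h \<otimes> inv x \<in> ?Z" using h by simp
  qed
qed

lemma part0:
  assumes G: "group G" and hac: "hac H A"
    and al: "\<alpha> \<in> iso A (G\<lparr>carrier := group_center G\<rparr>)" and be: "\<beta> \<in> iso (G Mod group_center G) H"
  shows "\<exists>\<sigma>. assoc_cocycle G A H \<sigma>"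
proof -
  interpret hac H A by (rule hac)
  interpret G: group G by (rule G)
  let ?Z = "group_center G"
  have nZ: "?Z \<lhd> G" by (rule center_normal[OF G])
  interpret N: normal ?Z G by (rule nZ)
  have Zsub: "?Z \<subseteq> carrier G" unfolding group_center_def by auto
  have ah: "\<alpha> \<in> hom A (G\<lparr>carrier := ?Z\<rparr>)" using al by (simp add: iso_iff)
  have aim: "\<alpha> ` carrier A = ?Z" using al by (simp add: iso_iff)
  have ainj: "inj_on \<alpha> (carrier A)" using al by (simp add: iso_iff)
  have ahG: "\<alpha> \<in> hom A G" using ah Zsub unfolding hom_def by auto
  define \<pi> where "\<pi> = (\<lambda>g. \<beta> (?Z #>\<^bsub>G\<^esub> g))"
  have bh: "\<beta> \<in> hom (G Mod ?Z) H" using be by (simp add: iso_iff)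
  have bim: "\<beta> ` carrier (G Mod ?Z) = carrier H" using be by (simp add: iso_iff)
  have binj: "inj_on \<beta> (carrier (G Mod ?Z))" using be by (simp add: iso_iff)
  have pih: "\<pi> \<in> hom G H"
    using hom_compose[OF N.r_coset_hom_Mod bh] unfolding \<pi>_def by (simp add: comp_def)
  have carrMod: "carrier (G Mod ?Z) = (\<lambda>g. ?Z #>\<^bsub>G\<^esub> g) ` carrier G"
    by (auto simp: FactGroup_def RCOSETS_def)
  have piim: "\<pi> ` carrier G = carrier H" using bim carrMod unfolding \<pi>_def by (simp add: image_image)
  have bgh: "group_hom (G Mod ?Z) H \<beta>"
    using bh by (simp add: group_hom_def group_hom_axioms_def N.factorgroup_is_group H.is_group)
  have b1: "\<beta> ?Z = \<one>\<^bsub>H\<^esub>" using group_hom.hom_one[OF bgh] by simp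
  have "?Z #>\<^bsub>G\<^esub> \<one>\<^bsub>G\<^esub> = ?Z" using G.coset_mult_one[OF Zsub] .
  then have Zc: "?Z \<in> carrier (G Mod ?Z)" using carrMod G.one_closed by (metis image_eqI)
  have ker: "kernel G H \<pi> = ?Z"
  proof
    show "kernel G H \<pi> \<subseteq> ?Z"
    proof
      fix g assume "g \<in> kernel G H \<pi>"
      then have g: "g \<in> carrier G" "\<beta> (?Z #>\<^bsub>G\<^esub> g) = \<beta> ?Z" unfolding kernel_def \<pi>_def using b1 by auto
      have "?Z #>\<^bsub>G\<^esub> g \<in> carrier (G Mod ?Z)" using carrMod g by blast
      then have "?Z #>\<^bsub>G\<^esub> g = ?Z" using inj_onD[OF binj g(2) _ Zc] by blast
      moreover have "g \<in> ?Z #>\<^bsub>G\<^esub> g" using G.rcos_self[OF g(1) N.subgroup_axioms] .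
      ultimately show "g \<in> ?Z" by simp
    qed
    show "?Z \<subseteq> kernel G H \<pi>"
    proof
      fix g assume g: "g \<in> ?Z"
      have "?Z #>\<^bsub>G\<^esub> g = ?Z" using N.rcos_const[OF G g] .
      then show "g \<in> kernel G H \<pi>" using g Zsub b1 unfolding kernel_def \<pi>_def by auto
    qed
  qed
  have ce: "center_extension G A H \<alpha> \<pi>"
    unfolding center_extension_def using ahG ainj aim pih piim ker by simp
  define s where "s = (\<lambda>h. SOME g. g \<in> carrier G \<and> \<pi> g = h)"
  have sp: "s h \<in> carrier G \<and> \<pi> (s h) = h" if h: "h \<in> carrier H" for h
  proof -
    have "h \<in> \<pi> ` carrier G" using piim h by simp
    then have "\<exists>g. g \<in> carrier G \<and> \<pi> g = h" by blast
    then show ?thesis unfolding s_def by (rule someI_ex)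
  qed
  define \<sigma> where "\<sigma> = (\<lambda>h1 h2. inv_into (carrier A) \<alpha> (inv\<^bsub>G\<^esub> (s (h1 \<otimes>\<^bsub>H\<^esub> h2)) \<otimes>\<^bsub>G\<^esub> s h1 \<otimes>\<^bsub>G\<^esub> s h2))"
  have pgh: "group_hom G H \<pi>" using pih by (simp add: group_hom_def group_hom_axioms_def G.is_group H.is_group)
  have ec: "extension_cocycle G A H \<alpha> \<pi> s \<sigma>"
    unfolding extension_cocycle_def
  proof (intro conjI ballI)
    fix h assume "h \<in> carrier H" then show "s h \<in> carrier G" "\<pi> (s h) = h" using sp by auto
  next
    fix h1 h2 assume h: "h1 \<in> carrier H" "h2 \<in> carrier H"
    let ?x = "inv\<^bsub>G\<^esub> (s (h1 \<otimes>\<^bsub>H\<^esub> h2)) \<otimes>\<^bsub>G\<^esub> s h1 \<otimes>\<^bsub>G\<^esub> s h2"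
    have sc: "s h1 \<in> carrier G" "s h2 \<in> carrier G" "s (h1 \<otimes>\<^bsub>H\<^esub> h2) \<in> carrier G" using sp h by auto
    have "\<pi> ?x = inv\<^bsub>H\<^esub> (h1 \<otimes>\<^bsub>H\<^esub> h2) \<otimes>\<^bsub>H\<^esub> h1 \<otimes>\<^bsub>H\<^esub> h2"
      using sc sp h by (simp add: group_hom.hom_mult[OF pgh] group_hom.hom_inv[OF pgh])
    also have "\<dots> = \<one>\<^bsub>H\<^esub>" using h by (simp add: H.inv_mult_group H.m_assoc)
    finally have "?x \<in> kernel G H \<pi>" using sc unfolding kernel_def by simp
    then have xa: "?x \<in> \<alpha> ` carrier A" using ker aim by simp
    show "\<sigma> h1 h2 \<in> carrier A" unfolding \<sigma>_def using xa by (simp add: inv_into_into)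
    show "\<alpha> (\<sigma> h1 h2) = ?x" unfolding \<sigma>_def using xa by (simp add: f_inv_into_f)
  qed
  show ?thesis unfolding assoc_cocycle_def using ce ec by blast
qed




context hac begin

lemma part3:
  assumes c: "cocycle2 H A \<rho>" and nd: "centrally_nondegenerate H \<rho>"
  shows "assoc_cocycle (tw H A \<rho>) A H \<rho>"
proof -
  let ?T = "tw H A \<rho>"
  interpret T: group ?T by (rule tw_group[OF c])
  note cc = coc_carr[OF c]
  define k where "k = \<rho> \<one>\<^bsub>H\<^esub> \<one>\<^bsub>H\<^esub>"
  have kc: "k \<in> carrier A" unfolding k_def using cc by simp
  have r1h: "\<And>h. h \<in> carrier H \<Longrightarrow> \<rho> \<one>\<^bsub>H\<^esub> h = k" unfolding k_def by (rule coc_1h[OF c])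
  have rh1: "\<And>h. h \<in> carrier H \<Longrightarrow> \<rho> h \<one>\<^bsub>H\<^esub> = k" unfolding k_def by (rule coc_h1[OF c])
  have kk: "\<rho> \<one>\<^bsub>H\<^esub> \<one>\<^bsub>H\<^esub> = k" by (simp add: k_def)
  define \<iota> where "\<iota> = (\<lambda>a. (\<one>\<^bsub>H\<^esub>, a \<otimes>\<^bsub>A\<^esub> inv\<^bsub>A\<^esub> k))"
  define s where "s = (\<lambda>h::'h. (h, \<one>\<^bsub>A\<^esub>))"
  have ihom: "\<iota> \<in> hom A ?T"
  proof (rule homI)
    show "\<And>x. x \<in> carrier A \<Longrightarrow> \<iota> x \<in> carrier ?T" using kc by (simp add: \<iota>_def)
    fix a b assume ab: "a \<in> carrier A" "b \<in> carrier A"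
    have "k \<otimes>\<^bsub>A\<^esub> (a \<otimes>\<^bsub>A\<^esub> inv\<^bsub>A\<^esub> k) \<otimes>\<^bsub>A\<^esub> (b \<otimes>\<^bsub>A\<^esub> inv\<^bsub>A\<^esub> k) = (k \<otimes>\<^bsub>A\<^esub> inv\<^bsub>A\<^esub> k) \<otimes>\<^bsub>A\<^esub> (a \<otimes>\<^bsub>A\<^esub> b \<otimes>\<^bsub>A\<^esub> inv\<^bsub>A\<^esub> k)"
      using ab kc by (simp only: A.m_ac A.inv_closed A.m_closed)
    also have "\<dots> = a \<otimes>\<^bsub>A\<^esub> b \<otimes>\<^bsub>A\<^esub> inv\<^bsub>A\<^esub> k" using ab kc by simp
    finally show "\<iota> (a \<otimes>\<^bsub>A\<^esub> b) = \<iota> a \<otimes>\<^bsub>?T\<^esub> \<iota> b" using kk by (simp add: \<iota>_def)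
  qed
  have iinj: "inj_on \<iota> (carrier A)"
    by (rule inj_onI) (use kc in \<open>auto simp: \<iota>_def A.r_cancel\<close>)
  have center: "group_center ?T = {\<one>\<^bsub>H\<^esub>} \<times> carrier A"
  proof
    show "group_center ?T \<subseteq> {\<one>\<^bsub>H\<^esub>} \<times> carrier A"
    proof
      fix x assume x: "x \<in> group_center ?T"
      then obtain g a where ga: "x = (g,a)" "g \<in> carrier H" "a \<in> carrier A"
        unfolding group_center_def by (cases x) auto
      have comm: "\<And>y. y \<in> carrier ?T \<Longrightarrow> x \<otimes>\<^bsub>?T\<^esub> y = y \<otimes>\<^bsub>?T\<^esub> x" using x unfolding group_center_def by auto
      have gh: "g \<otimes>\<^bsub>H\<^esub> h = h \<otimes>\<^bsub>H\<^esub> g \<and> \<rho> g h = \<rho> h g" if h: "h \<in> carrier H" for h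
      proof -
        have "(g,a) \<otimes>\<^bsub>?T\<^esub> (h, \<one>\<^bsub>A\<^esub>) = (h, \<one>\<^bsub>A\<^esub>) \<otimes>\<^bsub>?T\<^esub> (g,a)" using comm[of "(h, \<one>\<^bsub>A\<^esub>)"] h ga by simp
        then have e: "g \<otimes>\<^bsub>H\<^esub> h = h \<otimes>\<^bsub>H\<^esub> g" "\<rho> g h \<otimes>\<^bsub>A\<^esub> a \<otimes>\<^bsub>A\<^esub> \<one>\<^bsub>A\<^esub> = \<rho> h g \<otimes>\<^bsub>A\<^esub> \<one>\<^bsub>A\<^esub> \<otimes>\<^bsub>A\<^esub> a" by auto
        have "\<rho> g h \<otimes>\<^bsub>A\<^esub> a = \<rho> h g \<otimes>\<^bsub>A\<^esub> a" using e(2) ga h cc by simp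
        then have "\<rho> g h = \<rho> h g" using ga h cc A.r_cancel[of a "\<rho> g h" "\<rho> h g"] by simp
        then show ?thesis using e(1) by simp
      qed
      have "g = \<one>\<^bsub>H\<^esub>"
      proof (rule ccontr)
        assume "g \<noteq> \<one>\<^bsub>H\<^esub>"
        moreover have "g \<in> group_center H" using gh ga unfolding group_center_def by auto
        ultimately obtain h where "h \<in> carrier H" "\<rho> g h \<noteq> \<rho> h g"
          using nd unfolding centrally_nondegenerate_def by blast
        then show False using gh by blast
      qed
      then show "x \<in> {\<one>\<^bsub>H\<^esub>} \<times> carrier A" using ga by simp
    qed
    show "{\<one>\<^bsub>H\<^esub>} \<times> carrier A \<subseteq> group_center ?T"
    proof
      fix x assume "x \<in> {\<one>\<^bsub>H\<^esub>} \<times> carrier A"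
      then obtain a where x: "x = (\<one>\<^bsub>H\<^esub>, a)" "a \<in> carrier A" by auto
      have "x \<otimes>\<^bsub>?T\<^esub> y = y \<otimes>\<^bsub>?T\<^esub> x" if y: "y \<in> carrier ?T" for y
      proof -
        obtain h b where hb: "y = (h,b)" "h \<in> carrier H" "b \<in> carrier A" using y by (cases y) auto
        have "\<rho> \<one>\<^bsub>H\<^esub> h \<otimes>\<^bsub>A\<^esub> a \<otimes>\<^bsub>A\<^esub> b = \<rho> h \<one>\<^bsub>H\<^esub> \<otimes>\<^bsub>A\<^esub> b \<otimes>\<^bsub>A\<^esub> a"
          using r1h rh1 hb x kc by (simp add: A.m_ac)
        then show ?thesis using x hb by simp
      qed
      then show "x \<in> group_center ?T" using x unfolding group_center_def by auto
    qed
  qed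
  have iim: "\<iota> ` carrier A = {\<one>\<^bsub>H\<^esub>} \<times> carrier A"
  proof
    show "\<iota> ` carrier A \<subseteq> {\<one>\<^bsub>H\<^esub>} \<times> carrier A" using kc by (auto simp: \<iota>_def)
    show "{\<one>\<^bsub>H\<^esub>} \<times> carrier A \<subseteq> \<iota> ` carrier A"
    proof
      fix x assume "x \<in> {\<one>\<^bsub>H\<^esub>} \<times> carrier A"
      then obtain a where x: "x = (\<one>\<^bsub>H\<^esub>, a)" "a \<in> carrier A" by auto
      have "\<iota> (a \<otimes>\<^bsub>A\<^esub> k) = x" using x kc by (simp add: \<iota>_def A.m_assoc)
      moreover have "a \<otimes>\<^bsub>A\<^esub> k \<in> carrier A" using x kc by simp
      ultimately show "x \<in> \<iota> ` carrier A" by (metis image_eqI)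
    qed
  qed
  have phom: "fst \<in> hom ?T H" by (rule homI) auto
  have pim: "fst ` carrier ?T = carrier H"
  proof
    show "fst ` carrier ?T \<subseteq> carrier H" by auto
    show "carrier H \<subseteq> fst ` carrier ?T"
    proof
      fix h assume h: "h \<in> carrier H"
      have "(h, \<one>\<^bsub>A\<^esub>) \<in> carrier ?T" using h by simp
      then show "h \<in> fst ` carrier ?T" by (metis fst_conv image_eqI)
    qed
  qed
  have ker: "kernel ?T H fst = \<iota> ` carrier A" unfolding iim kernel_def by auto
  have ce: "center_extension ?T A H \<iota> fst"
    unfolding center_extension_def using ihom iinj iim center phom pim ker by simp
  have ec: "extension_cocycle ?T A H \<iota> fst s \<rho>"
    unfolding extension_cocycle_def
  proof (intro conjI ballI)
    fix h assume "h \<in> carrier H" then show "s h \<in> carrier ?T" "fst (s h) = h" by (auto simp: s_def)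
  next
    fix h1 h2 assume h: "h1 \<in> carrier H" "h2 \<in> carrier H"
    show rc: "\<rho> h1 h2 \<in> carrier A" using cc h by simp
    have sc: "s h1 \<in> carrier ?T" "s h2 \<in> carrier ?T" "s (h1 \<otimes>\<^bsub>H\<^esub> h2) \<in> carrier ?T" "\<iota> (\<rho> h1 h2) \<in> carrier ?T"
      using h rc kc by (auto simp: s_def \<iota>_def)
    have "k \<otimes>\<^bsub>A\<^esub> (\<rho> h1 h2 \<otimes>\<^bsub>A\<^esub> inv\<^bsub>A\<^esub> k) = \<rho> h1 h2"
      using rc kc A.m_lcomm[of k "\<rho> h1 h2" "inv\<^bsub>A\<^esub> k"] by simp
    then have "s h1 \<otimes>\<^bsub>?T\<^esub> s h2 = s (h1 \<otimes>\<^bsub>H\<^esub> h2) \<otimes>\<^bsub>?T\<^esub> \<iota> (\<rho> h1 h2)"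
      using h rh1 rc kc by (simp add: s_def \<iota>_def)
    then have "inv\<^bsub>?T\<^esub> s (h1 \<otimes>\<^bsub>H\<^esub> h2) \<otimes>\<^bsub>?T\<^esub> (s h1 \<otimes>\<^bsub>?T\<^esub> s h2) = \<iota> (\<rho> h1 h2)"
      using T.inv_solve_left'[OF sc(4) sc(3) T.m_closed[OF sc(1,2)]] by blast
    then show "\<iota> (\<rho> h1 h2) = inv\<^bsub>?T\<^esub> s (h1 \<otimes>\<^bsub>H\<^esub> h2) \<otimes>\<^bsub>?T\<^esub> s h1 \<otimes>\<^bsub>?T\<^esub> s h2"
      using T.m_assoc[OF T.inv_closed[OF sc(3)] sc(1) sc(2)] by simp
  qed
  show ?thesis unfolding assoc_cocycle_def using ce ec by blast
qed

end



theorem theorem2p8: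
  fixes H :: "'h monoid" and A :: "'a monoid"
  assumes "group H" and "comm_group A"
  shows
    \<comment> \<open>(0) every group G with Z(G) ~ A and G/Z(G) ~ H carries an extension cocycle\<close>
    "(\<forall>G :: 'g monoid. group G \<and> A \<cong> G\<lparr>carrier := group_center G\<rparr> \<and> (G Mod group_center G) \<cong> H
        \<longrightarrow> (\<exists>\<sigma>. assoc_cocycle G A H \<sigma>))
   \<and> \<comment> \<open>(1) such cocycles are centrally non-degenerate 2-cocycles\<close>
     (\<forall>(G :: 'g monoid) \<sigma>. group G \<and> assoc_cocycle G A H \<sigma>
        \<longrightarrow> cocycle2 H A \<sigma> \<and> centrally_nondegenerate H \<sigma>)
   \<and> \<comment> \<open>(2) well-defined and injective on isomorphism classes\<close>
     (\<forall>(G1 :: 'g monoid) (G2 :: 'k monoid) \<sigma>1 \<sigma>2.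
        group G1 \<and> group G2 \<and> assoc_cocycle G1 A H \<sigma>1 \<and> assoc_cocycle G2 A H \<sigma>2
        \<longrightarrow> (G1 \<cong> G2 \<longleftrightarrow> same_orbit H A \<sigma>1 \<sigma>2))
   \<and> \<comment> \<open>(3) surjective onto orbits of classes of centrally non-degenerate cocycles\<close>
     (\<forall>\<rho>. cocycle2 H A \<rho> \<and> centrally_nondegenerate H \<rho>
        \<longrightarrow> (\<exists>(G :: ('h \<times> 'a) monoid) \<sigma>. group G \<and> assoc_cocycle G A H \<sigma> \<and> same_orbit H A \<sigma> \<rho>))"
proof -
  have hac: "hac H A" using assms by (simp add: hac_def)
  interpret hac H A by (rule hac)
  have P0: "\<forall>G :: 'g monoid. group G \<and> A \<cong> G\<lparr>carrier := group_center G\<rparr> \<and> (G Mod group_center G) \<cong> H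
        \<longrightarrow> (\<exists>\<sigma>. assoc_cocycle G A H \<sigma>)"
    using part0[OF _ hac] unfolding is_iso_def by blast
  have P1: "cocycle2 H A \<sigma> \<and> centrally_nondegenerate H \<sigma>" if gg: "group G" "assoc_cocycle G A H \<sigma>"
    for G :: "('x,'y) monoid_scheme" and \<sigma>
  proof -
    obtain \<iota> \<pi> s where "cext G A H \<iota> \<pi> s \<sigma>" using assoc_cext gg assms by blast
    then interpret C: cext G A H \<iota> \<pi> s \<sigma> .
    show ?thesis using C.cocycle C.nondeg by simp
  qed
  have P2: "G1 \<cong> G2 \<longleftrightarrow> same_orbit H A \<sigma>1 \<sigma>2"
    if g: "group G1" "group G2" "assoc_cocycle G1 A H \<sigma>1" "assoc_cocycle G2 A H \<sigma>2"
    for G1 :: "'g monoid" and G2 :: "'k monoid" and \<sigma>1 \<sigma>2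
  proof -
    obtain \<iota>1 \<pi>1 s1 where c1: "cext G1 A H \<iota>1 \<pi>1 s1 \<sigma>1" using assoc_cext g assms by blast
    obtain \<iota>2 \<pi>2 s2 where c2: "cext G2 A H \<iota>2 \<pi>2 s2 \<sigma>2" using assoc_cext g assms by blast
    interpret C1: cext G1 A H \<iota>1 \<pi>1 s1 \<sigma>1 by (rule c1)
    interpret C2: cext G2 A H \<iota>2 \<pi>2 s2 \<sigma>2 by (rule c2)
    have co1: "cocycle2 H A \<sigma>1" by (rule C1.cocycle)
    have co2: "cocycle2 H A \<sigma>2" by (rule C2.cocycle)
    show ?thesis
    proof
      assume "G1 \<cong> G2"
      then have "G2 \<cong> G1" by (rule C1.G.iso_sym)
      then obtain \<phi> where phi: "\<phi> \<in> iso G2 G1" unfolding is_iso_def by blast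
      obtain \<psi>H \<psi>A where pH: "\<psi>H \<in> iso H H" and pA: "\<psi>A \<in> iso A A"
        and ch: "cohomologous H A (aut_act \<psi>H (\<lambda>x. x) \<sigma>1) (aut_act (\<lambda>x. x) \<psi>A \<sigma>2)"
        using transport[OF c1 c2 phi] by blast
      define \<chi> where "\<chi> = inv_into (carrier A) \<psi>A"
      have chi: "\<chi> \<in> iso A A" unfolding \<chi>_def by (rule A.iso_set_sym[OF pA])
      have chih: "\<chi> \<in> hom A A" using chi by (simp add: iso_iff)
      have pHh: "\<psi>H \<in> hom H H" using pH by (simp add: iso_iff)
      have idh: "(\<lambda>x. x) \<in> hom A A" using iso_set_refl by (simp add: iso_iff)
      have qinj: "inj_on \<psi>A (carrier A)" using pA by (simp add: iso_iff)
      have v: "vals (aut_act \<psi>H (\<lambda>x. x) \<sigma>1)" using aut_cocycle[OF co1 pHh idh] by (rule coc_vals)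
      have "cohomologous H A (\<lambda>h1 h2. \<chi> (aut_act \<psi>H (\<lambda>x. x) \<sigma>1 h1 h2)) (\<lambda>h1 h2. \<chi> (aut_act (\<lambda>x. x) \<psi>A \<sigma>2 h1 h2))"
        by (rule coh_hom[OF v ch chih])
      moreover have "(\<lambda>h1 h2. \<chi> (aut_act \<psi>H (\<lambda>x. x) \<sigma>1 h1 h2)) = aut_act \<psi>H \<chi> \<sigma>1"
        by (simp add: aut_act_def)
      ultimately have "cohomologous H A (aut_act \<psi>H \<chi> \<sigma>1) (\<lambda>h1 h2. \<chi> (aut_act (\<lambda>x. x) \<psi>A \<sigma>2 h1 h2))" by simp
      then have "cohomologous H A (aut_act \<psi>H \<chi> \<sigma>1) \<sigma>2"
        by (rule coh_cong) (simp add: aut_act_def \<chi>_def qinj coc_carr[OF co2])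
      then have "coh_class H A (aut_act \<psi>H \<chi> \<sigma>1) = coh_class H A \<sigma>2"
        using coh_class_eq aut_cocycle[OF co1 pHh chih] co2 by blast
      then show "same_orbit H A \<sigma>1 \<sigma>2" unfolding same_orbit_def using pH chi by blast
    next
      assume "same_orbit H A \<sigma>1 \<sigma>2"
      then obtain \<psi>H \<psi>A where pH: "\<psi>H \<in> iso H H" and pA: "\<psi>A \<in> iso A A"
        and eq: "coh_class H A (aut_act \<psi>H \<psi>A \<sigma>1) = coh_class H A \<sigma>2"
        unfolding same_orbit_def by blast
      have pHh: "\<psi>H \<in> hom H H" using pH by (simp add: iso_iff)
      have pAh: "\<psi>A \<in> hom A A" using pA by (simp add: iso_iff)
      have ca: "cocycle2 H A (aut_act \<psi>H \<psi>A \<sigma>1)" by (rule aut_cocycle[OF co1 pHh pAh])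
      have "\<sigma>2 \<in> coh_class H A \<sigma>2" unfolding coh_class_def using co2 coh_refl[OF coc_vals[OF co2]] by simp
      then have chm: "cohomologous H A (aut_act \<psi>H \<psi>A \<sigma>1) \<sigma>2" using eq unfolding coh_class_def by auto
      have "G1 \<cong> tw H A \<sigma>1" using group.iso_sym[OF tw_group[OF co1] C1.tw_iso_G] .
      also have "tw H A \<sigma>1 \<cong> tw H A (aut_act \<psi>H \<psi>A \<sigma>1)"
        using group.iso_sym[OF tw_group[OF ca] tw_aut_iso[OF co1 pH pA]] .
      also have "tw H A (aut_act \<psi>H \<psi>A \<sigma>1) \<cong> tw H A \<sigma>2" by (rule tw_coh_iso[OF ca chm])
      also have "tw H A \<sigma>2 \<cong> G2" by (rule C2.tw_iso_G)
      finally show "G1 \<cong> G2" .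
    qed
  qed
  have P3: "\<exists>(G :: ('h \<times> 'a) monoid) \<sigma>. group G \<and> assoc_cocycle G A H \<sigma> \<and> same_orbit H A \<sigma> \<rho>"
    if r: "cocycle2 H A \<rho>" "centrally_nondegenerate H \<rho>" for \<rho>
  proof -
    have "aut_act (\<lambda>x. x) (\<lambda>x. x) \<rho> = \<rho>" by (simp add: aut_act_def)
    then have "same_orbit H A \<rho> \<rho>" unfolding same_orbit_def using iso_set_refl by metis
    then show ?thesis using tw_group[OF r(1)] part3[OF r] by blast
  qed
  show ?thesis using P0 P1 P2 P3 by blast
qed


end
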